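(* Almost surely, $$\lim_{n\to\infty}\frac{\xi(n)}{\log n}=\lim_{n\to\infty}\frac{\eta(n)}{\log n}=\frac{-1}{\log(2q)}.$$
   Context: Let $0<q<p<1$ with $p+q=1$. Let $X_1,X_2,\dots$ be i.i.d. random variables with $\mathbf P(X_1=1)=p$, $\mathbf P(X_1=-1)=q$, and let $S_0=0$, $S_n=X_1+\dots+X_n$ (simple asymmetric random walk on $\mathbb Z$). For $z\in\mathbb Z$ and $n\ge1$ let $\xi(z,n)=\#\{k:0<k\le n,\ S_k=z\}$ be the local time, and $\xi(z,\infty)=\lim_{n\to\infty}\xi(z,n)$ (finite a.s. since the walk is transient). Define $\xi(n)=\max_{z\in\mathbb Z}\xi(z,n)$ and $\eta(n)=\max_{0\le j\le n}\xi(S_j,\infty)$. $\log$ denotes the natural logarithm. *)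

theory Defs
  imports "HOL-Probability.Probability"
begin

definition walk :: "(nat \<Rightarrow> 'a \<Rightarrow> int) \<Rightarrow> nat \<Rightarrow> 'a \<Rightarrow> int" where
  "walk X n w = (\<Sum>k\<in>{1..n}. X k w)"

definition local_time :: "(nat \<Rightarrow> 'a \<Rightarrow> int) \<Rightarrow> int \<Rightarrow> nat \<Rightarrow> 'a \<Rightarrow> nat" where
  "local_time X z n w = card {k. 0 < k \<and> k \<le> n \<and> walk X k w = z}"

text \<open>Total local time xi(z,infinity) = #{k : 0 < k, S_k = z} (the increasing limit of
  xi(z,n); finite almost surely, and on the null set where it is infinite card gives 0).\<close>
definition total_local_time :: "(nat \<Rightarrow> 'a \<Rightarrow> int) \<Rightarrow> int \<Rightarrow> 'a \<Rightarrow> nat" where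
  "total_local_time X z w = card {k. 0 < k \<and> walk X k w = z}"

definition max_local_time :: "(nat \<Rightarrow> 'a \<Rightarrow> int) \<Rightarrow> nat \<Rightarrow> 'a \<Rightarrow> nat" where
  "max_local_time X n w = Max {local_time X z n w | z. True}"

definition eta :: "(nat \<Rightarrow> 'a \<Rightarrow> int) \<Rightarrow> nat \<Rightarrow> 'a \<Rightarrow> nat" where
  "eta X n w = Max {total_local_time X (walk X j w) w | j. j \<le> n}"

end

theory Submission
  imports Defs
begin


locale rw =
  fixes p q :: real
  assumes q_pos: "0 < q" and qp: "q < p" and pq1: "p + q = 1"
begin

definition LL :: "nat \<Rightarrow> int list set" where
  "LL N = {s. length s = N \<and> set s \<subseteq> {-1,1}}"

definition wt :: "int list \<Rightarrow> real" where
  "wt s = prod_list (map (\<lambda>x. if x = 1 then p else q) s)"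

definition mu :: "nat \<Rightarrow> (int list \<Rightarrow> bool) \<Rightarrow> real" where
  "mu N P = (\<Sum>s\<in>{s\<in>LL N. P s}. wt s)"

lemma p_pos: "0 < p" using q_pos qp by simp

lemma finite_LL: "finite (LL N)"
proof -
  have "LL N \<subseteq> {s. set s \<subseteq> {-1,1} \<and> length s = N}" by (auto simp: LL_def)
  then show ?thesis using finite_lists_length_eq[of "{-1,1::int}" N] by (auto intro: finite_subset)
qed

lemma wt_nonneg: "wt s \<ge> 0"
  unfolding wt_def using q_pos p_pos
  by (induction s) auto

lemma LL_0: "LL 0 = {[]}" by (auto simp: LL_def)

lemma LL_Suc: "LL (Suc N) = (\<lambda>s. 1 # s) ` LL N \<union> (\<lambda>s. (-1) # s) ` LL N"
proof
  show "LL (Suc N) \<subseteq> (\<lambda>s. 1 # s) ` LL N \<union> (\<lambda>s. (-1) # s) ` LL N"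
  proof
    fix s assume "s \<in> LL (Suc N)"
    then obtain x s' where s: "s = x # s'" "length s' = N" "set s' \<subseteq> {-1,1}" "x \<in> {-1,1}"
      by (cases s) (auto simp: LL_def)
    then show "s \<in> (\<lambda>s. 1 # s) ` LL N \<union> (\<lambda>s. (-1) # s) ` LL N"
      by (auto simp: LL_def)
  qed
qed (auto simp: LL_def)

lemma mu_0: "mu 0 P = (if P [] then 1 else 0)"
proof (cases "P []")
  case True
  then have "{s\<in>LL 0. P s} = {[]}" by (auto simp: LL_0)
  then show ?thesis using True by (simp add: mu_def wt_def)
next
  case False
  then have e: "{s\<in>LL 0. P s} = {}" by (auto simp: LL_0)
  show ?thesis unfolding mu_def e using False by simp
qed

lemma mu_False: "mu N (\<lambda>_. False) = 0" by (simp add: mu_def)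

lemma mu_Suc: "mu (Suc N) P = p * mu N (\<lambda>s. P (1 # s)) + q * mu N (\<lambda>s. P ((-1) # s))"
proof -
  have eq: "{s\<in>LL (Suc N). P s} = (\<lambda>s. 1 # s) ` {s\<in>LL N. P (1#s)} \<union> (\<lambda>s. (-1) # s) ` {s\<in>LL N. P ((-1)#s)}"
    by (auto simp: LL_Suc)
  have "mu (Suc N) P = (\<Sum>s\<in>(\<lambda>s. 1 # s) ` {s\<in>LL N. P (1#s)}. wt s) + (\<Sum>s\<in>(\<lambda>s. (-1) # s) ` {s\<in>LL N. P ((-1)#s)}. wt s)"
    unfolding mu_def eq
    by (rule sum.union_disjoint) (auto intro: finite_subset[OF _ finite_LL])
  also have "\<dots> = (\<Sum>s\<in>{s\<in>LL N. P (1#s)}. p * wt s) + (\<Sum>s\<in>{s\<in>LL N. P ((-1)#s)}. q * wt s)"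
    by (subst sum.reindex, simp add: inj_on_def, subst sum.reindex, simp add: inj_on_def) (simp add: wt_def)
  also have "\<dots> = p * mu N (\<lambda>s. P (1 # s)) + q * mu N (\<lambda>s. P ((-1) # s))"
    by (simp add: mu_def sum_distrib_left)
  finally show ?thesis .
qed

lemma mu_nonneg: "mu N P \<ge> 0"
  unfolding mu_def by (intro sum_nonneg wt_nonneg)

lemma mu_cong: "(\<And>s. s \<in> LL N \<Longrightarrow> P s \<longleftrightarrow> Q s) \<Longrightarrow> mu N P = mu N Q"
  unfolding mu_def by (rule sum.cong) auto

lemma mu_mono: "(\<And>s. s \<in> LL N \<Longrightarrow> P s \<Longrightarrow> Q s) \<Longrightarrow> mu N P \<le> mu N Q"
  unfolding mu_def by (rule sum_mono2) (auto intro: finite_subset[OF _ finite_LL] wt_nonneg)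

lemma mu_split: "mu N P = mu N (\<lambda>s. P s \<and> Q s) + mu N (\<lambda>s. P s \<and> \<not> Q s)"
proof -
  have "{s\<in>LL N. P s} = {s\<in>LL N. P s \<and> Q s} \<union> {s\<in>LL N. P s \<and> \<not> Q s}" by auto
  then show ?thesis unfolding mu_def
    by (simp, subst sum.union_disjoint[symmetric]) (auto intro: finite_subset[OF _ finite_LL])
qed

lemma mu_True: "mu N (\<lambda>_. True) = 1"
  by (induction N) (simp_all add: mu_0 mu_Suc pq1)

lemma mu_le1: "mu N P \<le> 1"
  using mu_mono[of N P "\<lambda>_. True"] mu_True by simp

lemma mu_compl: "mu N (\<lambda>s. \<not> P s) = 1 - mu N P"
  using mu_split[of N "\<lambda>_. True" P] mu_True by simp

lemma mu_append:
  "mu (a + b) (\<lambda>s. P (take a s) \<and> Q (drop a s)) = mu a P * mu b Q"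
proof (induction a arbitrary: P)
  case 0
  then show ?case by (cases "P []") (simp_all add: mu_0 mu_False)
next
  case (Suc a)
  have "mu (Suc a + b) (\<lambda>s. P (take (Suc a) s) \<and> Q (drop (Suc a) s))
    = p * mu (a + b) (\<lambda>s. P (1 # take a s) \<and> Q (drop a s)) + q * mu (a + b) (\<lambda>s. P ((-1) # take a s) \<and> Q (drop a s))"
    by (simp add: mu_Suc)
  also have "\<dots> = mu (Suc a) P * mu b Q"
    using Suc.IH[of "\<lambda>s. P (1 # s)"] Suc.IH[of "\<lambda>s. P ((-1) # s)"]
    by (simp add: mu_Suc algebra_simps)
  finally show ?case .
qed

lemma mu_take: "n \<le> N \<Longrightarrow> mu N (\<lambda>s. P (take n s)) = mu n P"
  using mu_append[of n "N - n" P "\<lambda>_. True"] mu_True by simp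

lemma mu_drop: "n \<le> N \<Longrightarrow> mu N (\<lambda>s. Q (drop n s)) = mu (N - n) Q"
  using mu_append[of n "N - n" "\<lambda>_. True" Q] mu_True by simp

lemma mu_mono_len: "n \<le> N \<Longrightarrow> (\<And>s. s \<in> LL N \<Longrightarrow> P (take n s) \<Longrightarrow> Q s) \<Longrightarrow> mu n P \<le> mu N Q"
  using mu_take[of n N P] mu_mono[of N "\<lambda>s. P (take n s)" Q] by simp

lemma mu_disj: "(\<And>s. s \<in> LL N \<Longrightarrow> \<not> (P s \<and> Q s)) \<Longrightarrow> mu N (\<lambda>s. P s \<or> Q s) = mu N P + mu N Q"
  using mu_split[of N "\<lambda>s. P s \<or> Q s" P] by (metis (mono_tags, lifting) mu_cong)

lemma mu_Ex_disj:
  assumes "finite T" "\<And>s t t'. s \<in> LL N \<Longrightarrow> t \<in> T \<Longrightarrow> t' \<in> T \<Longrightarrow> t \<noteq> t' \<Longrightarrow> \<not> (P t s \<and> P t' s)"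
  shows "mu N (\<lambda>s. \<exists>t\<in>T. P t s) = (\<Sum>t\<in>T. mu N (P t))"
  using assms
proof (induction T rule: finite_induct)
  case empty
  then show ?case using mu_compl[of N "\<lambda>_. True"] mu_True by simp
next
  case (insert x F)
  have "mu N (\<lambda>s. \<exists>t\<in>insert x F. P t s) = mu N (\<lambda>s. P x s \<or> (\<exists>t\<in>F. P t s))" by simp
  also have "\<dots> = mu N (P x) + mu N (\<lambda>s. \<exists>t\<in>F. P t s)"
    by (rule mu_disj) (use insert.prems insert.hyps in blast)
  also have "mu N (\<lambda>s. \<exists>t\<in>F. P t s) = (\<Sum>t\<in>F. mu N (P t))"
    by (rule insert.IH) (use insert.prems in blast)
  finally show ?case using insert.hyps by simp
qed

end


definition hit :: "int \<Rightarrow> int list \<Rightarrow> bool" where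
  "hit z s = (\<exists>t\<in>{1..length s}. sum_list (take t s) = z)"

definition lt :: "int \<Rightarrow> int list \<Rightarrow> nat" where
  "lt z s = card {t\<in>{1..length s}. sum_list (take t s) = z}"

definition Fz :: "int \<Rightarrow> int list \<Rightarrow> bool" where
  "Fz z u = (u \<noteq> [] \<and> sum_list u = z)"

definition fp :: "(int list \<Rightarrow> bool) \<Rightarrow> nat \<Rightarrow> int list \<Rightarrow> bool" where
  "fp F t u = (length u = t \<and> F u \<and> (\<forall>t'<t. \<not> F (take t' u)))"

lemma first_exists:
  assumes "F (take t s)" "t \<le> length s"
  shows "\<exists>t0\<le>t. fp F t0 (take t0 s)"
proof -
  define t0 where "t0 = (LEAST t. F (take t s))"
  have F0: "F (take t0 s)" unfolding t0_def by (rule LeastI[of _ t]) (rule assms(1))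
  have le: "t0 \<le> t" unfolding t0_def by (rule Least_le) (rule assms(1))
  have nf: "\<not> F (take t' s)" if "t' < t0" for t'
    using not_less_Least[of t' "\<lambda>t. F (take t s)"] that unfolding t0_def by blast
  have "fp F t0 (take t0 s)"
    unfolding fp_def using F0 le assms(2) nf by (auto simp: min_def)
  then show ?thesis using le by blast
qed

lemma fp_unique:
  assumes "fp F t (take t s)" "fp F t' (take t' s)"
  shows "t = t'"
proof (rule ccontr)
  assume "t \<noteq> t'"
  then consider "t < t'" | "t' < t" by linarith
  then show False
  proof cases
    case 1
    then show False using assms by (auto simp: fp_def min_def)
  next
    case 2
    then show False using assms by (auto simp: fp_def min_def)
  qed
qed

lemma hit_Nil[simp]: "\<not> hit z []" by (simp add: hit_def)

lemma hit_Cons: "hit a (x # s) \<longleftrightarrow> x = a \<or> hit (a - x) s"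
proof
  assume "hit a (x # s)"
  then obtain t where t: "t \<in> {1..Suc (length s)}" "sum_list (take t (x # s)) = a"
    unfolding hit_def by auto
  show "x = a \<or> hit (a - x) s"
  proof (cases "t = 1")
    case True then show ?thesis using t by simp
  next
    case False
    then obtain t' where "t = Suc t'" "t' \<in> {1..length s}" using t(1) by (cases t) auto
    then show ?thesis using t(2) unfolding hit_def by auto
  qed
next
  assume "x = a \<or> hit (a - x) s"
  then show "hit a (x # s)"
  proof
    assume "x = a" then show ?thesis unfolding hit_def by (intro bexI[of _ 1]) auto
  next
    assume "hit (a - x) s"
    then obtain t where "t \<in> {1..length s}" "sum_list (take t s) = a - x" unfolding hit_def by auto
    then show ?thesis unfolding hit_def by (intro bexI[of _ "Suc t"]) auto
  qed
qed

lemma hit_iff_fp: "hit z s \<longleftrightarrow> (\<exists>t\<le>length s. fp (Fz z) t (take t s))"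
proof
  assume "hit z s"
  then obtain t where t: "t \<in> {1..length s}" "sum_list (take t s) = z" unfolding hit_def by auto
  then have "Fz z (take t s)" unfolding Fz_def by (cases s) auto
  from first_exists[of "Fz z" t s] this t show "\<exists>t\<le>length s. fp (Fz z) t (take t s)"
    by (meson atLeastAtMost_iff order_trans)
next
  assume "\<exists>t\<le>length s. fp (Fz z) t (take t s)"
  then obtain t where t: "t \<le> length s" "fp (Fz z) t (take t s)" by blast
  then have "t \<noteq> 0" by (auto simp: fp_def Fz_def)
  then show "hit z s" using t unfolding hit_def fp_def Fz_def by auto
qed

lemma ivt_down:
  fixes s :: "int list"
  assumes "set s \<subseteq> {-1,1}"
  shows "t \<le> length s \<Longrightarrow> sum_list (take t s) \<le> b \<Longrightarrow> b \<le> 0 \<Longrightarrow> \<exists>t'\<le>t. sum_list (take t' s) = b"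
proof (induction t)
  case 0
  moreover have "sum_list (take 0 s) = 0" by simp
  ultimately have "b = 0" by linarith
  then show ?case by (intro exI[of _ 0]) simp
next
  case (Suc t)
  have st: "take (Suc t) s = take t s @ [s ! t]" using Suc.prems(1) by (simp add: take_Suc_conv_app_nth)
  have "s ! t \<in> set s" using Suc.prems(1) by simp
  then have x: "s ! t \<in> {-1,1}" using assms by blast
  show ?case
  proof (cases "sum_list (take t s) \<le> b")
    case True
    then show ?thesis using Suc by (meson Suc_leD le_SucI)
  next
    case False
    then have "sum_list (take (Suc t) s) = b" using Suc.prems(2) st x by auto
    then show ?thesis by blast
  qed
qed

lemma ivt_up:
  fixes s :: "int list"
  assumes "set s \<subseteq> {-1,1}"
  shows "t \<le> length s \<Longrightarrow> b \<le> sum_list (take t s) \<Longrightarrow> 0 \<le> b \<Longrightarrow> \<exists>t'\<le>t. sum_list (take t' s) = b"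
proof (induction t)
  case 0
  moreover have "sum_list (take 0 s) = 0" by simp
  ultimately have "b = 0" by linarith
  then show ?case by (intro exI[of _ 0]) simp
next
  case (Suc t)
  have st: "take (Suc t) s = take t s @ [s ! t]" using Suc.prems(1) by (simp add: take_Suc_conv_app_nth)
  have "s ! t \<in> set s" using Suc.prems(1) by simp
  then have x: "s ! t \<in> {-1,1}" using assms by blast
  show ?case
  proof (cases "b \<le> sum_list (take t s)")
    case True
    then show ?thesis using Suc by (meson Suc_leD le_SucI)
  next
    case False
    then have "sum_list (take (Suc t) s) = b" using Suc.prems(2) st x by auto
    then show ?thesis by blast
  qed
qed

lemma hit2:
  assumes s: "set s \<subseteq> {-1,1}" and a: "a = 1 \<or> a = -1"
  shows "hit (2 * a) s \<longleftrightarrow> (\<exists>t\<le>length s. fp (Fz a) t (take t s) \<and> hit a (drop t s))"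
proof
  assume "hit (2 * a) s"
  then obtain t2 where t2: "t2 \<in> {1..length s}" "sum_list (take t2 s) = 2 * a" unfolding hit_def by auto
  have "\<exists>t'\<le>t2. sum_list (take t' s) = a"
    using a
  proof
    assume "a = 1" then show ?thesis using ivt_up[OF s, of t2 a] t2 by auto
  next
    assume "a = -1" then show ?thesis using ivt_down[OF s, of t2 a] t2 by auto
  qed
  then obtain t' where t': "t' \<le> t2" "sum_list (take t' s) = a" by blast
  have "t' \<noteq> 0"
  proof
    assume "t' = 0" with t' a show False by auto
  qed
  then have "Fz a (take t' s)" using t' t2 unfolding Fz_def by (cases s) auto
  from first_exists[of "Fz a" t' s] this obtain t1 where t1: "t1 \<le> t'" "fp (Fz a) t1 (take t1 s)"
    using t' t2 by auto
  have s1: "sum_list (take t1 s) = a" using t1 by (simp add: fp_def Fz_def)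
  have "t1 \<noteq> t2" using s1 t2 a by auto
  then have lt12: "t1 < t2" using t1 t' by simp
  have "take t2 s = take t1 s @ take (t2 - t1) (drop t1 s)"
    using lt12 take_add[of t1 "t2 - t1" s] by simp
  then have "sum_list (take (t2 - t1) (drop t1 s)) = a" using s1 t2 by simp
  then have "hit a (drop t1 s)" unfolding hit_def using lt12 t2 by (intro bexI[of _ "t2 - t1"]) auto
  then show "\<exists>t\<le>length s. fp (Fz a) t (take t s) \<and> hit a (drop t s)"
    using t1 t' t2 by (intro exI[of _ t1]) auto
next
  assume "\<exists>t\<le>length s. fp (Fz a) t (take t s) \<and> hit a (drop t s)"
  then obtain t where t: "t \<le> length s" "fp (Fz a) t (take t s)" "hit a (drop t s)" by blast
  then obtain v where v: "v \<in> {1..length s - t}" "sum_list (take v (drop t s)) = a" unfolding hit_def by auto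
  have s1: "sum_list (take t s) = a" using t by (simp add: fp_def Fz_def)
  have "take (t + v) s = take t s @ take v (drop t s)" by (simp add: take_add)
  then have "sum_list (take (t + v) s) = 2 * a" using s1 v by simp
  then show "hit (2 * a) s" unfolding hit_def using v t by (intro bexI[of _ "t + v"]) auto
qed

lemma lt_fp:
  assumes "fp (Fz z) t (take t s)" "t \<le> length s"
  shows "lt z s = Suc (lt 0 (drop t s))"
proof -
  define B where "B = {v\<in>{1..length s - t}. sum_list (take v (drop t s)) = 0}"
  have s1: "sum_list (take t s) = z" and ne: "take t s \<noteq> []" using assms by (auto simp: fp_def Fz_def)
  have t1: "t \<ge> 1" using ne by (cases t) auto
  have nf: "\<not> Fz z (take u s)" if "u < t" for u
    using assms that by (auto simp: fp_def min_def)
  have eq: "{u\<in>{1..length s}. sum_list (take u s) = z} = insert t ((\<lambda>v. t + v) ` B)"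
  proof
    show "{u\<in>{1..length s}. sum_list (take u s) = z} \<subseteq> insert t ((\<lambda>v. t + v) ` B)"
    proof
      fix u assume u: "u \<in> {u\<in>{1..length s}. sum_list (take u s) = z}"
      consider "u < t" | "u = t" | "t < u" by linarith
      then show "u \<in> insert t ((\<lambda>v. t + v) ` B)"
      proof cases
        case 1
        have "take u s \<noteq> []" using u by (cases s) auto
        then have "Fz z (take u s)" using u by (simp add: Fz_def)
        then show ?thesis using nf 1 by blast
      next
        case 2 then show ?thesis by simp
      next
        case 3
        have "take u s = take t s @ take (u - t) (drop t s)"
          using 3 take_add[of t "u - t" s] by simp
        then have "sum_list (take (u - t) (drop t s)) = 0" using u s1 by simp
        then have "u - t \<in> B" unfolding B_def using u 3 by auto
        then show ?thesis using 3 by (intro insertI2 image_eqI[of _ _ "u - t"]) auto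
      qed
    qed
  next
    show "insert t ((\<lambda>v. t + v) ` B) \<subseteq> {u\<in>{1..length s}. sum_list (take u s) = z}"
    proof
      fix u assume "u \<in> insert t ((\<lambda>v. t + v) ` B)"
      then show "u \<in> {u\<in>{1..length s}. sum_list (take u s) = z}"
      proof
        assume "u = t" then show ?thesis using t1 assms(2) s1 by auto
      next
        assume "u \<in> (\<lambda>v. t + v) ` B"
        then obtain v where v: "v \<in> B" "u = t + v" by blast
        have "take (t + v) s = take t s @ take v (drop t s)" by (simp add: take_add)
        then show ?thesis using v s1 unfolding B_def by auto
      qed
    qed
  qed
  have finB: "finite B" unfolding B_def by simp
  have "t \<notin> (\<lambda>v. t + v) ` B" unfolding B_def by auto
  then have "card (insert t ((\<lambda>v. t + v) ` B)) = Suc (card B)"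
    using finB by (simp add: card_image)
  moreover have "lt 0 (drop t s) = card B" unfolding lt_def B_def by simp
  ultimately show ?thesis unfolding lt_def eq by simp
qed

lemma lt_pos: "1 \<le> lt z s \<longleftrightarrow> hit z s"
proof -
  let ?A = "{t\<in>{1..length s}. sum_list (take t s) = z}"
  have fin: "finite ?A" by simp
  have "1 \<le> card ?A \<longleftrightarrow> ?A \<noteq> {}" using fin by (simp add: Suc_le_eq card_gt_0_iff)
  moreover have "?A \<noteq> {} \<longleftrightarrow> hit z s" unfolding hit_def by blast
  ultimately show ?thesis unfolding lt_def by simp
qed

lemma lt_Suc_iff:
  "Suc k \<le> lt z s \<longleftrightarrow> (\<exists>t\<le>length s. fp (Fz z) t (take t s) \<and> k \<le> lt 0 (drop t s))"
proof
  assume a: "Suc k \<le> lt z s"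
  then have "hit z s" using lt_pos[of z s] by simp
  then obtain t where t: "t\<le>length s" "fp (Fz z) t (take t s)" using hit_iff_fp by blast
  then show "\<exists>t\<le>length s. fp (Fz z) t (take t s) \<and> k \<le> lt 0 (drop t s)"
    using lt_fp[OF t(2,1)] a by auto
next
  assume "\<exists>t\<le>length s. fp (Fz z) t (take t s) \<and> k \<le> lt 0 (drop t s)"
  then obtain t where t: "t\<le>length s" "fp (Fz z) t (take t s)" "k \<le> lt 0 (drop t s)" by blast
  then show "Suc k \<le> lt z s" using lt_fp[OF t(2,1)] by simp
qed

lemma take_take_le: "t \<le> n \<Longrightarrow> take t (take n s) = take t s"
  by (simp add: min_def)

lemma hit_take: "hit z (take n s) \<Longrightarrow> hit z s"
proof -
  assume "hit z (take n s)"
  then obtain t where t: "t\<in>{1..length (take n s)}" "sum_list (take t (take n s)) = z"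
    unfolding hit_def by blast
  then have "take t (take n s) = take t s" by (intro take_take_le) simp
  then show "hit z s" using t unfolding hit_def by auto
qed

lemma lt_take: "lt z (take n s) \<le> lt z s"
  unfolding lt_def
proof (rule card_mono)
  show "{t \<in> {1..length (take n s)}. sum_list (take t (take n s)) = z}
    \<subseteq> {t \<in> {1..length s}. sum_list (take t s) = z}"
  proof
    fix t assume t: "t \<in> {t \<in> {1..length (take n s)}. sum_list (take t (take n s)) = z}"
    then have "take t (take n s) = take t s" by (intro take_take_le) simp
    then show "t \<in> {t \<in> {1..length s}. sum_list (take t s) = z}" using t by auto
  qed
qed simp


context rw
begin

lemma decomp:
  "mu N (\<lambda>s. \<exists>t\<le>N. fp F t (take t s) \<and> G t (drop t s)) = (\<Sum>t\<le>N. mu t (fp F t) * mu (N - t) (G t))"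
proof -
  have "mu N (\<lambda>s. \<exists>t\<le>N. fp F t (take t s) \<and> G t (drop t s))
      = mu N (\<lambda>s. \<exists>t\<in>{..N}. fp F t (take t s) \<and> G t (drop t s))" by (rule mu_cong) auto
  also have "\<dots> = (\<Sum>t\<in>{..N}. mu N (\<lambda>s. fp F t (take t s) \<and> G t (drop t s)))"
    by (rule mu_Ex_disj) (auto dest: fp_unique)
  also have "\<dots> = (\<Sum>t\<le>N. mu t (fp F t) * mu (N - t) (G t))"
  proof (rule sum.cong)
    fix t assume "t \<in> {..N}"
    then show "mu N (\<lambda>s. fp F t (take t s) \<and> G t (drop t s)) = mu t (fp F t) * mu (N - t) (G t)"
      using mu_append[of t "N - t" "fp F t" "G t"] by simp
  qed simp
  finally show ?thesis .
qed

definition f :: "int \<Rightarrow> nat \<Rightarrow> real" where "f z t = mu t (fp (Fz z) t)"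

lemma f_nonneg: "f z t \<ge> 0" unfolding f_def by (rule mu_nonneg)

lemma LL_len: "s \<in> LL N \<Longrightarrow> length s = N" by (simp add: LL_def)
lemma LL_set: "s \<in> LL N \<Longrightarrow> set s \<subseteq> {-1,1}" by (simp add: LL_def)

lemma hit_sum: "mu N (hit z) = (\<Sum>t\<le>N. f z t)"
proof -
  have "mu N (hit z) = mu N (\<lambda>s. \<exists>t\<le>N. fp (Fz z) t (take t s) \<and> (\<lambda>_ _. True) t (drop t s))"
    by (rule mu_cong) (simp add: hit_iff_fp LL_len)
  also have "\<dots> = (\<Sum>t\<le>N. f z t)" using decomp[of N "Fz z" "\<lambda>_ _. True"] by (simp add: mu_True f_def)
  finally show ?thesis .
qed

lemma lt_sum: "mu N (\<lambda>s. Suc k \<le> lt z s) = (\<Sum>t\<le>N. f z t * mu (N - t) (\<lambda>s. k \<le> lt 0 s))"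
proof -
  have "mu N (\<lambda>s. Suc k \<le> lt z s) = mu N (\<lambda>s. \<exists>t\<le>N. fp (Fz z) t (take t s) \<and> (\<lambda>_ s. k \<le> lt 0 s) t (drop t s))"
    by (rule mu_cong) (simp add: lt_Suc_iff LL_len)
  also have "\<dots> = (\<Sum>t\<le>N. f z t * mu (N - t) (\<lambda>s. k \<le> lt 0 s))" using decomp[of N "Fz z" "\<lambda>_ s. k \<le> lt 0 s"] by (simp add: f_def)
  finally show ?thesis .
qed

lemma hit2_sum:
  assumes "a = 1 \<or> a = -1"
  shows "mu N (hit (2 * a)) = (\<Sum>t\<le>N. f a t * mu (N - t) (hit a))"
proof -
  have "mu N (hit (2 * a)) = mu N (\<lambda>s. \<exists>t\<le>N. fp (Fz a) t (take t s) \<and> (\<lambda>_. hit a) t (drop t s))"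
    by (rule mu_cong) (use hit2[OF _ assms] LL_len LL_set in auto)
  also have "\<dots> = (\<Sum>t\<le>N. f a t * mu (N - t) (hit a))" using decomp[of N "Fz a" "\<lambda>_. hit a"] by (simp add: f_def)
  finally show ?thesis .
qed

lemma h_mono: "n \<le> N \<Longrightarrow> mu n (hit a) \<le> mu N (hit a)"
  by (rule mu_mono_len) (auto intro: hit_take)

lemma hm_Suc: "mu (Suc N) (hit (-1)) = q + p * mu N (hit (-2))"
  by (simp add: mu_Suc hit_Cons mu_True)

lemma hp_Suc: "mu (Suc N) (hit 1) = p + q * mu N (hit 2)"
  by (simp add: mu_Suc hit_Cons mu_True)

lemma R_Suc: "mu (Suc N) (hit 0) = p * mu N (hit (-1)) + q * mu N (hit 1)"
  by (simp add: mu_Suc hit_Cons)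

lemma hm_upper: "mu N (hit (-1)) \<le> q / p"
proof -
  have "\<forall>n\<le>N. mu n (hit (-1)) \<le> q / p"
  proof (induction N)
    case 0
    then show ?case using q_pos p_pos by (simp add: mu_0)
  next
    case (Suc N)
    have "mu N (hit (2 * (-1))) = (\<Sum>t\<le>N. f (-1) t * mu (N - t) (hit (-1)))"
      by (rule hit2_sum) simp
    also have "\<dots> \<le> (\<Sum>t\<le>N. f (-1) t * (q / p))"
      using Suc.IH by (intro sum_mono mult_left_mono f_nonneg) auto
    also have "\<dots> = mu N (hit (-1)) * (q / p)" unfolding hit_sum by (rule sum_distrib_right[symmetric])
    also have "\<dots> \<le> (q / p) * (q / p)"
      using Suc.IH q_pos p_pos by (intro mult_right_mono) auto
    finally have "mu N (hit (-2)) \<le> (q / p) * (q / p)" by simp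
    then have "mu (Suc N) (hit (-1)) \<le> q + p * ((q / p) * (q / p))"
      unfolding hm_Suc using p_pos by (intro add_left_mono mult_left_mono) auto
    also have "\<dots> = q / p"
    proof -
      have "q + p * ((q / p) * (q / p)) = q * (p + q) / p" using p_pos by (simp add: field_simps)
      then show ?thesis using pq1 by simp
    qed
    finally show ?case using Suc.IH le_Suc_eq by auto
  qed
  then show ?thesis by simp
qed

lemma R_upper: "mu N (hit 0) \<le> 2 * q"
proof (cases N)
  case 0
  then show ?thesis using q_pos by (simp add: mu_0)
next
  case (Suc n)
  have "p * mu n (hit (-1)) \<le> p * (q / p)" using hm_upper p_pos by (intro mult_left_mono) auto
  moreover have "q * mu n (hit 1) \<le> q * 1" using mu_le1 q_pos by (intro mult_left_mono) auto
  ultimately show ?thesis unfolding Suc R_Suc using p_pos by simp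
qed

lemma lt0_upper: "mu N (\<lambda>s. k \<le> lt 0 s) \<le> (2 * q) ^ k"
proof (induction k arbitrary: N)
  case 0
  then show ?case using mu_le1 by simp
next
  case (Suc k)
  have "mu N (\<lambda>s. Suc k \<le> lt 0 s) = (\<Sum>t\<le>N. f 0 t * mu (N - t) (\<lambda>s. k \<le> lt 0 s))" by (rule lt_sum)
  also have "\<dots> \<le> (\<Sum>t\<le>N. f 0 t * (2 * q) ^ k)"
    using Suc.IH by (intro sum_mono mult_left_mono f_nonneg) auto
  also have "\<dots> = mu N (hit 0) * (2 * q) ^ k" by (simp add: hit_sum sum_distrib_right)
  also have "\<dots> \<le> (2 * q) * (2 * q) ^ k"
    using R_upper q_pos by (intro mult_right_mono) auto
  finally show ?case by simp
qed

lemma ltz_upper: "mu N (\<lambda>s. Suc k \<le> lt z s) \<le> (2 * q) ^ k"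
proof -
  have "mu N (\<lambda>s. Suc k \<le> lt z s) = (\<Sum>t\<le>N. f z t * mu (N - t) (\<lambda>s. k \<le> lt 0 s))" by (rule lt_sum)
  also have "\<dots> \<le> (\<Sum>t\<le>N. f z t * (2 * q) ^ k)"
    using lt0_upper by (intro sum_mono mult_left_mono f_nonneg) auto
  also have "\<dots> = mu N (hit z) * (2 * q) ^ k" by (simp add: hit_sum sum_distrib_right)
  also have "\<dots> \<le> 1 * (2 * q) ^ k"
    using mu_le1 q_pos by (intro mult_right_mono) auto
  finally show ?thesis by simp
qed

lemma lt0_lower: "k * T \<le> N \<Longrightarrow> mu N (\<lambda>s. k \<le> lt 0 s) \<ge> (mu T (hit 0)) ^ k"
proof (induction k arbitrary: N)
  case 0
  then show ?case using mu_True by simp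
next
  case (Suc k)
  have "(mu T (hit 0)) ^ Suc k = (\<Sum>t\<le>T. f 0 t * (mu T (hit 0)) ^ k)"
    by (simp add: hit_sum sum_distrib_right)
  also have "\<dots> \<le> (\<Sum>t\<le>T. f 0 t * mu (N - t) (\<lambda>s. k \<le> lt 0 s))"
  proof (intro sum_mono mult_left_mono f_nonneg)
    fix t assume "t \<in> {..T}"
    then have "k * T \<le> N - t" using Suc.prems by auto
    then show "mu T (hit 0) ^ k \<le> mu (N - t) (\<lambda>s. k \<le> lt 0 s)" by (rule Suc.IH)
  qed
  also have "\<dots> \<le> (\<Sum>t\<le>N. f 0 t * mu (N - t) (\<lambda>s. k \<le> lt 0 s))"
    using Suc.prems by (intro sum_mono2) (auto intro: mult_nonneg_nonneg f_nonneg mu_nonneg)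
  also have "\<dots> = mu N (\<lambda>s. Suc k \<le> lt 0 s)" by (rule lt_sum[symmetric])
  finally show ?case .
qed

lemma h_lower_rec:
  assumes "a = 1 \<or> a = -1"
  shows "mu (2 * N) (hit (2 * a)) \<ge> (mu N (hit a))^2"
proof -
  have "(mu N (hit a))^2 = (\<Sum>t\<le>N. f a t * mu N (hit a))"
    by (simp add: hit_sum sum_distrib_right power2_eq_square)
  also have "\<dots> \<le> (\<Sum>t\<le>N. f a t * mu (2 * N - t) (hit a))"
    by (intro sum_mono mult_left_mono f_nonneg h_mono) auto
  also have "\<dots> \<le> (\<Sum>t\<le>2 * N. f a t * mu (2 * N - t) (hit a))"
    by (intro sum_mono2) (auto intro: mult_nonneg_nonneg f_nonneg mu_nonneg)
  also have "\<dots> = mu (2 * N) (hit (2 * a))" by (rule hit2_sum[symmetric, OF assms])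
  finally show ?thesis .
qed

lemma lim_rec:
  fixes u :: "nat \<Rightarrow> real"
  assumes inc: "incseq u" and le1: "\<And>N. u N \<le> 1" and rec: "\<And>N. u (Suc (2 * N)) \<ge> \<alpha> + \<beta> * (u N)^2"
  shows "\<exists>L. u \<longlonglongrightarrow> L \<and> L \<le> 1 \<and> \<alpha> + \<beta> * L^2 \<le> L"
proof -
  have bdd: "bdd_above (range u)" using le1 by (intro bdd_aboveI[of _ 1]) auto
  define L where "L = (SUP N. u N)"
  have lim: "u \<longlonglongrightarrow> L" unfolding L_def by (rule LIMSEQ_incseq_SUP[OF bdd inc])
  have "L \<le> 1" using lim le1 by (intro LIMSEQ_le_const2) auto
  have sm: "strict_mono (\<lambda>N::nat. Suc (2 * N))" by (rule strict_monoI) simp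
  have lim2: "(\<lambda>N. u (Suc (2 * N))) \<longlonglongrightarrow> L"
    using LIMSEQ_subseq_LIMSEQ[OF lim sm] by (simp add: o_def)
  have lim3: "(\<lambda>N. \<alpha> + \<beta> * (u N)^2) \<longlonglongrightarrow> \<alpha> + \<beta> * L^2"
    by (intro tendsto_intros lim)
  have "\<alpha> + \<beta> * L^2 \<le> L"
    by (rule LIMSEQ_le[OF lim3 lim2]) (use rec in auto)
  then show ?thesis using lim \<open>L \<le> 1\<close> by blast
qed

lemma hm_lim: "\<exists>L. (\<lambda>N. mu N (hit (-1))) \<longlonglongrightarrow> L \<and> L \<ge> q / p"
proof -
  have "\<exists>L. (\<lambda>N. mu N (hit (-1))) \<longlonglongrightarrow> L \<and> L \<le> 1 \<and> q + p * L^2 \<le> L"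
  proof (rule lim_rec)
    show "incseq (\<lambda>N. mu N (hit (-1)))" by (intro incseq_SucI h_mono) simp
    show "mu N (hit (-1)) \<le> 1" for N by (rule mu_le1)
    fix N
    have "(mu N (hit (-1)))^2 \<le> mu (2 * N) (hit (2 * (-1)))" by (rule h_lower_rec) simp
    then show "q + p * (mu N (hit (-1)))^2 \<le> mu (Suc (2 * N)) (hit (-1))"
      unfolding hm_Suc using p_pos by simp
  qed
  then obtain L where L: "(\<lambda>N. mu N (hit (-1))) \<longlonglongrightarrow> L" "L \<le> 1" "q + p * L^2 \<le> L" by blast
  have "L \<ge> q / p"
  proof (rule ccontr)
    assume "\<not> L \<ge> q / p"
    then have "p * L < q" using p_pos by (simp add: field_simps)
    moreover have "L < 1"
    proof -
      have "L < q / p" using \<open>\<not> L \<ge> q / p\<close> by simp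
      moreover have "q / p < 1" using qp p_pos by simp
      ultimately show ?thesis by linarith
    qed
    ultimately have "(p * L - q) * (L - 1) > 0" by (intro mult_neg_neg) auto
    moreover have "(p * L - q) * (L - 1) = p * L^2 - (p + q) * L + q" by (simp add: algebra_simps power2_eq_square)
    ultimately have "p * L^2 - L + q > 0" using pq1 by simp
    then show False using L(3) by simp
  qed
  then show ?thesis using L(1) by blast
qed

lemma hp_lim: "(\<lambda>N. mu N (hit 1)) \<longlonglongrightarrow> 1"
proof -
  have "\<exists>L. (\<lambda>N. mu N (hit 1)) \<longlonglongrightarrow> L \<and> L \<le> 1 \<and> p + q * L^2 \<le> L"
  proof (rule lim_rec)
    show "incseq (\<lambda>N. mu N (hit 1))" by (intro incseq_SucI h_mono) simp
    show "mu N (hit 1) \<le> 1" for N by (rule mu_le1)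
    fix N
    have "(mu N (hit 1))^2 \<le> mu (2 * N) (hit (2 * 1))" by (rule h_lower_rec) simp
    then show "p + q * (mu N (hit 1))^2 \<le> mu (Suc (2 * N)) (hit 1)"
      unfolding hp_Suc using q_pos by simp
  qed
  then obtain L where L: "(\<lambda>N. mu N (hit 1)) \<longlonglongrightarrow> L" "L \<le> 1" "p + q * L^2 \<le> L" by blast
  have "L = 1"
  proof (rule ccontr)
    assume "L \<noteq> 1"
    then have "L < 1" using L(2) by simp
    moreover have "q * L < p" using L(2) q_pos qp
      by (smt (verit) mult_left_le mult_nonneg_nonneg)
    ultimately have "(q * L - p) * (L - 1) > 0" by (intro mult_neg_neg) auto
    moreover have "(q * L - p) * (L - 1) = q * L^2 - (p + q) * L + p" by (simp add: algebra_simps power2_eq_square)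
    ultimately have "q * L^2 - L + p > 0" using pq1 by simp
    then show False using L(3) by simp
  qed
  then show ?thesis using L(1) by simp
qed

lemma R_large: "\<rho> < 2 * q \<Longrightarrow> \<exists>T. mu T (hit 0) > \<rho>"
proof -
  assume r: "\<rho> < 2 * q"
  obtain L where L: "(\<lambda>N. mu N (hit (-1))) \<longlonglongrightarrow> L" "L \<ge> q / p" using hm_lim by blast
  have lim: "(\<lambda>N. mu (Suc N) (hit 0)) \<longlonglongrightarrow> p * L + q * 1"
    unfolding R_Suc by (intro tendsto_intros L(1) hp_lim)
  have "p * L \<ge> p * (q / p)" using L(2) p_pos by (intro mult_left_mono) auto
  then have "p * L + q * 1 > \<rho>" using r p_pos by simp
  from order_tendstoD(1)[OF lim this] obtain N where "mu (Suc N) (hit 0) > \<rho>"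
    by (meson eventually_sequentially order_refl)
  then show ?thesis by blast
qed

end


context rw
begin

lemma blocks:
  "mu (m * L + r) (\<lambda>s. \<forall>i<m. B (take L (drop (i * L) s))) = mu L B ^ m"
proof (induction m)
  case 0
  then show ?case using mu_True by simp
next
  case (Suc m)
  have "mu (Suc m * L + r) (\<lambda>s. \<forall>i<Suc m. B (take L (drop (i * L) s)))
     = mu (L + (m * L + r)) (\<lambda>s. (\<lambda>u. B (take L u)) (take L s) \<and>
          (\<lambda>u. \<forall>i<m. B (take L (drop (i * L) u))) (drop L s))"
  proof -
    have "(\<forall>i<Suc m. B (take L (drop (i * L) s))) \<longleftrightarrow>
          B (take L (take L s)) \<and> (\<forall>i<m. B (take L (drop (i * L) (drop L s))))" for s
      by (simp add: All_less_Suc2 drop_drop add.commute)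
    then show ?thesis by (simp add: algebra_simps)
  qed
  also have "\<dots> = mu L (\<lambda>u. B (take L u)) * mu (m * L + r) (\<lambda>u. \<forall>i<m. B (take L (drop (i * L) u)))"
    by (rule mu_append)
  also have "mu L (\<lambda>u. B (take L u)) = mu L B"
    by (rule mu_cong) (simp add: LL_len)
  finally show ?case using Suc.IH by simp
qed

lemma block_visit:
  assumes "j + L \<le> length s" "k \<le> lt 0 (take L (drop j s))"
  shows "k \<le> lt (sum_list (take j s)) s"
proof -
  let ?A = "{v\<in>{1..length (take L (drop j s))}. sum_list (take v (take L (drop j s))) = 0}"
  let ?B = "{u\<in>{1..length s}. sum_list (take u s) = sum_list (take j s)}"
  have "(\<lambda>v. j + v) ` ?A \<subseteq> ?B"
  proof
    fix u assume "u \<in> (\<lambda>v. j + v) ` ?A"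
    then obtain v where v: "v \<in> ?A" "u = j + v" by blast
    have vL: "v \<le> L" using v by simp
    have "take v (take L (drop j s)) = take v (drop j s)" using vL by (rule take_take_le)
    moreover have "take (j + v) s = take j s @ take v (drop j s)" by (simp add: take_add)
    ultimately show "u \<in> ?B" using v assms(1) by auto
  qed
  then have "card ((\<lambda>v. j + v) ` ?A) \<le> card ?B" by (intro card_mono) auto
  moreover have "card ((\<lambda>v. j + v) ` ?A) = card ?A" by (rule card_image) simp
  ultimately show ?thesis using assms(2) unfolding lt_def by simp
qed

lemma blocks_bound:
  assumes "m * L \<le> N"
  shows "mu N (\<lambda>s. \<forall>z. lt z s < k) \<le> (1 - mu L (\<lambda>s. k \<le> lt 0 s)) ^ m"
proof -
  have "mu N (\<lambda>s. \<forall>z. lt z s < k) \<le> mu N (\<lambda>s. \<forall>i<m. (\<lambda>u. \<not> k \<le> lt 0 u) (take L (drop (i * L) s)))"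
  proof (rule mu_mono)
    fix s assume s: "s \<in> LL N" "\<forall>z. lt z s < k"
    show "\<forall>i<m. (\<lambda>u. \<not> k \<le> lt 0 u) (take L (drop (i * L) s))"
    proof (intro allI impI)
      fix i assume "i < m"
      then have "i * L + L \<le> m * L" by (metis add.commute mult_Suc less_eq_Suc_le mult_le_mono1)
      then have "i * L + L \<le> length s" using assms s(1) LL_len by fastforce
      then show "(\<lambda>u. \<not> k \<le> lt 0 u) (take L (drop (i * L) s))"
        using block_visit[of "i * L" L s k] s(2) by (meson not_le)
    qed
  qed
  also have "\<dots> = mu L (\<lambda>u. \<not> k \<le> lt 0 u) ^ m"
    using blocks[of m L "N - m * L" "\<lambda>u. \<not> k \<le> lt 0 u"] assms by simp
  also have "\<dots> = (1 - mu L (\<lambda>s. k \<le> lt 0 s)) ^ m" by (simp add: mu_compl)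
  finally show ?thesis .
qed

end


locale rwp = rw p q + prob_space M for p q :: real and M :: "'a measure" +
  fixes X :: "nat \<Rightarrow> 'a \<Rightarrow> int"
  assumes indep: "indep_vars (\<lambda>_. count_space UNIV) X {1..}"
    and P1: "\<And>i. i \<ge> 1 \<Longrightarrow> prob {w \<in> space M. X i w = 1} = p"
    and Pm1: "\<And>i. i \<ge> 1 \<Longrightarrow> prob {w \<in> space M. X i w = -1} = q"
begin

definition xs :: "nat \<Rightarrow> 'a \<Rightarrow> int list" where
  "xs N w = map (\<lambda>i. X (Suc i) w) [0..<N]"

lemma meas_X: "i \<ge> 1 \<Longrightarrow> X i \<in> measurable M (count_space UNIV)"
  using indep unfolding indep_vars_def2 by auto

lemma sets_X: "i \<ge> 1 \<Longrightarrow> {w \<in> space M. X i w = x} \<in> sets M"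
proof -
  assume "i \<ge> 1"
  from measurable_sets[OF meas_X[OF this], of "{x}"]
  show ?thesis by (simp add: vimage_def Int_def conj_commute)
qed

lemma prob_X: "i \<ge> 1 \<Longrightarrow> x \<in> {-1, 1} \<Longrightarrow> prob {w \<in> space M. X i w = x} = (if x = 1 then p else q)"
  using P1 Pm1 by auto

lemma AE_X: "AE w in M. X i w \<in> {-1, 1}" if "i \<ge> 1"
proof -
  let ?A = "{w \<in> space M. X i w = 1}" and ?B = "{w \<in> space M. X i w = -1}"
  have AB: "?A \<in> sets M" "?B \<in> sets M" using sets_X[OF that] by auto
  have "prob (?A \<union> ?B) = prob ?A + prob ?B"
    by (rule finite_measure_Union) (use AB in auto)
  then have u: "prob (?A \<union> ?B) = 1" using P1[OF that] Pm1[OF that] pq1 by simp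
  have "prob (space M - (?A \<union> ?B)) = 0" using prob_compl[of "?A \<union> ?B"] AB u by auto
  moreover have "space M - (?A \<union> ?B) \<in> sets M" using AB by auto
  ultimately have "space M - (?A \<union> ?B) \<in> null_sets M"
    by (simp add: null_sets_def emeasure_eq_measure)
  then show ?thesis by (rule AE_I') auto
qed

lemma AE_allX: "AE w in M. \<forall>i. i \<ge> 1 \<longrightarrow> X i w \<in> {-1, 1}"
  unfolding AE_all_countable using AE_X by auto

lemma AE_xs: "AE w in M. \<forall>N. xs N w \<in> LL N"
  using AE_allX by eventually_elim (auto simp: xs_def LL_def)

lemma sets_xs_eq: "{w \<in> space M. xs N w = s} \<in> sets M"
proof -
  have "{w \<in> space M. xs N w = s} = {w \<in> space M. length s = N \<and> (\<forall>i\<in>{..<N}. X (Suc i) w = s ! i)}"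
    by (auto simp: xs_def list_eq_iff_nth_eq)
  also have "\<dots> \<in> sets M"
    by (intro sets.sets_Collect_conj sets.sets_Collect_const sets.sets_Collect_finite_All sets_X) auto
  finally show ?thesis .
qed

lemma sets_xs: "{w \<in> space M. P (xs N w)} \<in> sets M"
proof -
  have "{w \<in> space M. P (xs N w)} = {w \<in> space M. \<exists>s. P s \<and> xs N w = s}" by auto
  also have "\<dots> \<in> sets M"
    by (intro sets.sets_Collect_countable_Ex sets.sets_Collect_conj sets.sets_Collect_const sets_xs_eq)
  finally show ?thesis .
qed

lemma prod_list_nth: "prod_list (map g s) = (\<Prod>i<length s. g (s ! i))"
  by (induction s rule: rev_induct) (simp_all add: nth_append)

lemma prob_xs_eq:
  assumes s: "s \<in> LL N"
  shows "prob {w \<in> space M. xs N w = s} = wt s"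
proof (cases "N = 0")
  case True
  then show ?thesis using s by (simp add: LL_0 xs_def wt_def prob_space)
next
  case False
  have len: "length s = N" using s by (simp add: LL_len)
  have ind: "indep_sets (\<lambda>i. {X i -` A \<inter> space M | A. A \<in> sets (count_space UNIV)}) {1..}"
    using indep unfolding indep_vars_def2 by auto
  define A where "A j = X j -` {s ! (j - 1)} \<inter> space M" for j
  have "prob (\<Inter>j\<in>{1..N}. A j) = (\<Prod>j\<in>{1..N}. prob (A j))"
    by (rule indep_setsD[OF ind]) (use False in \<open>auto simp: A_def\<close>)
  moreover have "(\<Inter>j\<in>{1..N}. A j) = {w \<in> space M. xs N w = s}"
  proof
    show "(\<Inter>j\<in>{1..N}. A j) \<subseteq> {w \<in> space M. xs N w = s}"
    proof
      fix w assume w: "w \<in> (\<Inter>j\<in>{1..N}. A j)"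
      have "w \<in> space M" using w False unfolding A_def by auto
      moreover have "X (Suc i) w = s ! i" if "i < N" for i
        using w that unfolding A_def by auto
      ultimately show "w \<in> {w \<in> space M. xs N w = s}"
        using len by (auto simp: xs_def list_eq_iff_nth_eq)
    qed
  next
    show "{w \<in> space M. xs N w = s} \<subseteq> (\<Inter>j\<in>{1..N}. A j)"
    proof
      fix w assume w: "w \<in> {w \<in> space M. xs N w = s}"
      show "w \<in> (\<Inter>j\<in>{1..N}. A j)"
      proof
        fix j assume j: "j \<in> {1..N}"
        have "\<forall>i<N. X (Suc i) w = s ! i" using w len
          by (auto simp: xs_def list_eq_iff_nth_eq)
        moreover have "j - 1 < N" using j by auto
        ultimately have "X (Suc (j - 1)) w = s ! (j - 1)" by blast
        moreover have "Suc (j - 1) = j" using j by simp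
        ultimately show "w \<in> A j" using j w unfolding A_def by auto
      qed
    qed
  qed
  moreover have "(\<Prod>j\<in>{1..N}. prob (A j)) = wt s"
  proof -
    have "(\<Prod>j\<in>{1..N}. prob (A j)) = (\<Prod>i<N. prob (A (Suc i)))"
      by (simp add: prod.atLeast1_atMost_eq)
    also have "\<dots> = (\<Prod>i<N. (if s ! i = 1 then p else q))"
    proof (rule prod.cong)
      fix i assume "i \<in> {..<N}"
      then have "s ! i \<in> set s" using len by simp
      then have "s ! i \<in> {-1, 1}" using LL_set[OF s] by blast
      moreover have "A (Suc i) = {w \<in> space M. X (Suc i) w = s ! i}" unfolding A_def by auto
      ultimately show "prob (A (Suc i)) = (if s ! i = 1 then p else q)"
        using prob_X[of "Suc i" "s ! i"] by simp
    qed simp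
    also have "\<dots> = wt s" unfolding wt_def prod_list_nth len by simp
    finally show ?thesis .
  qed
  ultimately show ?thesis by simp
qed

lemma bridge: "prob {w \<in> space M. P (xs N w)} = mu N P"
proof -
  have "prob {w \<in> space M. P (xs N w)} = prob (\<Union>s\<in>{s\<in>LL N. P s}. {w \<in> space M. xs N w = s})"
  proof (rule finite_measure_eq_AE)
    show "AE x in M. (x \<in> {w \<in> space M. P (xs N w)}) = (x \<in> (\<Union>s\<in>{s \<in> LL N. P s}. {w \<in> space M. xs N w = s}))"
      using AE_xs by eventually_elim auto
    show "{w \<in> space M. P (xs N w)} \<in> sets M" by (rule sets_xs)
    show "(\<Union>s\<in>{s \<in> LL N. P s}. {w \<in> space M. xs N w = s}) \<in> sets M"
      by (intro sets.finite_UN sets_xs_eq) (auto intro: finite_subset[OF _ finite_LL])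
  qed
  also have "\<dots> = (\<Sum>s\<in>{s\<in>LL N. P s}. prob {w \<in> space M. xs N w = s})"
    by (rule finite_measure_finite_Union)
       (auto intro: finite_subset[OF _ finite_LL] sets_xs_eq simp: disjoint_family_on_def)
  also have "\<dots> = mu N P" unfolding mu_def by (rule sum.cong) (auto intro: prob_xs_eq)
  finally show ?thesis .
qed

lemma walk_xs: "n \<le> N \<Longrightarrow> walk X n w = sum_list (take n (xs N w))"
proof -
  assume "n \<le> N"
  then have "take n (xs N w) = map (\<lambda>i. X (Suc i) w) [0..<n]" by (simp add: xs_def take_map)
  then have "sum_list (take n (xs N w)) = (\<Sum>i<n. X (Suc i) w)"
    by (simp add: sum_list_sum_nth atLeast0LessThan)
  also have "\<dots> = walk X n w" unfolding walk_def by (simp add: sum.atLeast1_atMost_eq)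
  finally show ?thesis by simp
qed

lemma local_time_xs: "local_time X z n w = lt z (xs n w)"
proof -
  have "{k. 0 < k \<and> k \<le> n \<and> walk X k w = z} = {t\<in>{1..length (xs n w)}. sum_list (take t (xs n w)) = z}"
    by (auto simp: xs_def walk_xs)
  then show ?thesis unfolding local_time_def lt_def by simp
qed

end


context rwp
begin

lemma xs_take: "N \<le> N' \<Longrightarrow> xs N w = take N (xs N' w)"
  by (simp add: xs_def take_map)

lemma lt_xs_mono: "N \<le> N' \<Longrightarrow> lt z (xs N w) \<le> lt z (xs N' w)"
  using lt_take[of z N "xs N' w"] by (simp add: xs_take)

definition Cset :: "int \<Rightarrow> nat \<Rightarrow> 'a set" where
  "Cset z k = {w\<in>space M. \<exists>N. k \<le> lt z (xs N w)}"

lemma sets_C: "Cset z k \<in> sets M"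
  unfolding Cset_def by (intro sets.sets_Collect_countable_Ex sets_xs)

lemma prob_C: "prob (Cset z (Suc k)) \<le> (2 * q) ^ k"
proof -
  define A where "A N = {w\<in>space M. Suc k \<le> lt z (xs N w)}" for N
  have rA: "range A \<subseteq> sets M" unfolding A_def using sets_xs by auto
  have iA: "incseq A" unfolding A_def incseq_def using lt_xs_mono by (auto intro: order_trans)
  have U: "Cset z (Suc k) = (\<Union>N. A N)" unfolding Cset_def A_def by auto
  have lim: "(\<lambda>N. prob (A N)) \<longlonglongrightarrow> prob (Cset z (Suc k))"
    unfolding U by (rule finite_Lim_measure_incseq[OF rA iA])
  have "prob (A N) \<le> (2 * q) ^ k" for N
    using bridge[of "\<lambda>s. Suc k \<le> lt z s" N] ltz_upper[of N k z] unfolding A_def by simp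
  then show ?thesis by (intro LIMSEQ_le_const2[OF lim]) auto
qed

definition Dset :: "nat \<Rightarrow> nat \<Rightarrow> 'a set" where
  "Dset n k = (\<Union>z\<in>{-int n..int n}. Cset z k)"

lemma sets_D: "Dset n k \<in> sets M"
  unfolding Dset_def by (intro sets.finite_UN sets_C) auto

lemma prob_D: "prob (Dset n (Suc k)) \<le> (2 * real n + 1) * (2 * q) ^ k"
proof -
  have "prob (Dset n (Suc k)) \<le> (\<Sum>z\<in>{-int n..int n}. prob (Cset z (Suc k)))"
    unfolding Dset_def by (rule measure_UNION_le) (auto intro: sets_C)
  also have "\<dots> \<le> (\<Sum>z\<in>{-int n..int n}. (2 * q) ^ k)" by (intro sum_mono prob_C)
  also have "\<dots> = (2 * real n + 1) * (2 * q) ^ k"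
  proof -
    have "card {-int n..int n} = 2 * n + 1" by simp
    then show ?thesis by simp
  qed
  finally show ?thesis .
qed

lemma walk_abs:
  assumes "\<forall>i. i \<ge> 1 \<longrightarrow> X i w \<in> {-1, 1}"
  shows "\<bar>walk X j w\<bar> \<le> int j"
proof -
  have "\<bar>walk X j w\<bar> \<le> (\<Sum>i\<in>{1..j}. \<bar>X i w\<bar>)" unfolding walk_def by (rule sum_abs)
  also have "\<dots> = (\<Sum>i\<in>{1..j}. 1)" using assms by (intro sum.cong) auto
  finally show ?thesis by simp
qed

lemma tlt_bound:
  assumes "Suc k \<le> total_local_time X z w"
  shows "\<exists>N. Suc k \<le> lt z (xs N w)"
proof -
  let ?V = "{t. 0 < t \<and> walk X t w = z}"
  have "finite ?V" using assms unfolding total_local_time_def by (intro card_ge_0_finite) simp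
  then obtain N where N: "\<forall>t\<in>?V. t \<le> N" using finite_nat_set_iff_bounded_le by blast
  have "{k. 0 < k \<and> k \<le> N \<and> walk X k w = z} = ?V" using N by auto
  then have "local_time X z N w = total_local_time X z w"
    unfolding local_time_def total_local_time_def by simp
  then show ?thesis using assms local_time_xs by metis
qed

lemma eta_D:
  assumes w: "w \<in> space M" "\<forall>i. i \<ge> 1 \<longrightarrow> X i w \<in> {-1, 1}" and k: "Suc k \<le> eta X n w"
  shows "w \<in> Dset n (Suc k)"
proof -
  have eq: "{total_local_time X (walk X j w) w | j. j \<le> n} = (\<lambda>j. total_local_time X (walk X j w) w) ` {..n}"
    by auto
  have "\<exists>x\<in>(\<lambda>j. total_local_time X (walk X j w) w) ` {..n}. Suc k \<le> x"
    using k unfolding eta_def eq by (subst (asm) Max_ge_iff) auto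
  then obtain j where j: "j \<le> n" "Suc k \<le> total_local_time X (walk X j w) w" by auto
  from tlt_bound[OF j(2)] obtain N where "Suc k \<le> lt (walk X j w) (xs N w)" by blast
  moreover have "walk X j w \<in> {-int n..int n}" using walk_abs[OF w(2), of j] j(1) by auto
  ultimately show ?thesis unfolding Dset_def Cset_def using w(1) by blast
qed

lemma AE_fin: "AE w in M. \<forall>z. finite {t. 0 < t \<and> walk X t w = z}"
  unfolding AE_all_countable
proof
  fix z :: int
  define N0 where "N0 = (\<Inter>k. Cset z (Suc k))"
  have sN0: "N0 \<in> sets M" unfolding N0_def using sets_C by auto
  have le: "prob N0 \<le> (2 * q) ^ k" for k
  proof -
    have "prob N0 \<le> prob (Cset z (Suc k))" unfolding N0_def
      by (rule finite_measure_mono) (auto intro: sets_C)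
    then show ?thesis using prob_C[of z k] by simp
  qed
  have lim: "(\<lambda>k. (2 * q) ^ k) \<longlonglongrightarrow> 0"
    using q_pos qp pq1 by (intro LIMSEQ_power_zero) simp
  have "prob N0 \<le> 0" using LIMSEQ_le_const[OF lim, of "prob N0"] le by blast
  then have null: "N0 \<in> null_sets M" using sN0
    by (simp add: null_sets_def emeasure_eq_measure measure_le_0_iff)
  show "AE w in M. finite {t. 0 < t \<and> walk X t w = z}"
  proof (rule AE_I'[OF null])
    show "{w \<in> space M. \<not> finite {t. 0 < t \<and> walk X t w = z}} \<subseteq> N0"
    proof
      fix w assume w: "w \<in> {w \<in> space M. \<not> finite {t. 0 < t \<and> walk X t w = z}}"
      have "w \<in> Cset z (Suc k)" for k
      proof -
        obtain B where B: "B \<subseteq> {t. 0 < t \<and> walk X t w = z}" "finite B" "card B = Suc k"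
          using infinite_arbitrarily_large[of "{t. 0 < t \<and> walk X t w = z}" "Suc k"] w by auto
        have "B \<subseteq> {t. 0 < t \<and> t \<le> Max B \<and> walk X t w = z}" using B by auto
        then have "card B \<le> local_time X z (Max B) w" unfolding local_time_def
          by (intro card_mono) auto
        then have "Suc k \<le> lt z (xs (Max B) w)" using B(3) local_time_xs by simp
        then show ?thesis unfolding Cset_def using w by auto
      qed
      then show "w \<in> N0" unfolding N0_def by blast
    qed
  qed
qed

lemma lt_le_n: "local_time X z n w \<le> n"
proof -
  have "local_time X z n w \<le> card {1..n}" unfolding local_time_def by (intro card_mono) auto
  then show ?thesis by simp
qed

lemma fin_lts: "finite {local_time X z n w | z. True}"
  by (rule finite_subset[of _ "{..n}"]) (auto intro: lt_le_n)

lemma lt_le_max: "local_time X z n w \<le> max_local_time X n w"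
  unfolding max_local_time_def by (rule Max_ge[OF fin_lts]) auto

lemma xi_le_eta:
  assumes fin: "\<forall>z. finite {t. 0 < t \<and> walk X t w = z}"
  shows "max_local_time X n w \<le> eta X n w"
proof -
  have "max_local_time X n w \<in> {local_time X z n w | z. True}"
    unfolding max_local_time_def by (rule Max_in[OF fin_lts]) auto
  then obtain z0 where z0: "max_local_time X n w = local_time X z0 n w" by auto
  show ?thesis
  proof (cases "local_time X z0 n w = 0")
    case True
    then show ?thesis using z0 by simp
  next
    case False
    then obtain t where t: "0 < t" "t \<le> n" "walk X t w = z0"
      unfolding local_time_def by (metis (mono_tags, lifting) card.empty empty_Collect_eq)
    have "local_time X z0 n w \<le> total_local_time X z0 w"
      unfolding local_time_def total_local_time_def by (intro card_mono) (use fin in auto)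
    also have "\<dots> \<le> eta X n w"
      unfolding eta_def using t
      by (intro Max_ge) (auto simp: image_def)
    finally show ?thesis using z0 by simp
  qed
qed

end


lemma squeeze:
  fixes g :: "nat \<Rightarrow> real" and c :: real
  assumes c: "c > 0"
    and H: "\<And>j::nat. \<exists>C. eventually (\<lambda>n. (c - c / (real j + 2)) * ln (real n) - C \<le> g n \<and> g n \<le> (c + c / (real j + 2)) * ln (real n) + C) sequentially"
  shows "(\<lambda>n. g n / ln (real n)) \<longlonglongrightarrow> c"
proof (rule tendstoI)
  fix \<delta> :: real assume d: "\<delta> > 0"
  obtain j :: nat where j: "2 * c / \<delta> < real j" using reals_Archimedean2 by blast
  have e: "c / (real j + 2) < \<delta> / 2"
  proof -
    have "2 * c < \<delta> * real j" using j d by (simp add: field_simps)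
    also have "\<dots> < \<delta> * (real j + 2)" using d by simp
    finally have "2 * c < \<delta> * (real j + 2)" .
    then show ?thesis by (simp add: field_simps)
  qed
  obtain C where C: "eventually (\<lambda>n. (c - c / (real j + 2)) * ln (real n) - C \<le> g n \<and> g n \<le> (c + c / (real j + 2)) * ln (real n) + C) sequentially"
    using H by blast
  have lnlim: "filterlim (\<lambda>n. ln (real n)) at_top sequentially"
    by (rule filterlim_compose[OF ln_at_top filterlim_real_sequentially])
  have ev: "eventually (\<lambda>n. max 1 (2 * \<bar>C\<bar> / \<delta>) < ln (real n)) sequentially"
    using lnlim unfolding filterlim_at_top_dense by (rule spec)
  show "eventually (\<lambda>n. dist (g n / ln (real n)) c < \<delta>) sequentially"
    using C ev
  proof eventually_elim
    case (elim n)
    define l where "l = ln (real n)"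
    have l0: "l > 0" using elim(2) unfolding l_def by simp
    have Cl: "\<bar>C\<bar> < (\<delta> / 2) * l" using elim(2) d unfolding l_def by (simp add: field_simps)
    have el: "c / (real j + 2) * l \<le> (\<delta> / 2) * l" using e l0 by (intro mult_right_mono) auto
    define E where "E = c / (real j + 2) * l"
    have lo: "c * l - E - C \<le> g n" using elim(1) unfolding E_def l_def by (simp add: algebra_simps)
    have hi: "g n \<le> c * l + E + C" using elim(1) unfolding E_def l_def by (simp add: algebra_simps)
    have C2: "C < (\<delta> / 2) * l" "- C < (\<delta> / 2) * l" using Cl by (simp_all add: abs_less_iff)
    have E2: "E \<le> (\<delta> / 2) * l" using el unfolding E_def .
    have "g n - c * l < \<delta> * l" using hi C2 E2 by linarith
    moreover have "- (\<delta> * l) < g n - c * l" using lo C2 E2 by linarith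
    ultimately have "\<bar>g n - c * l\<bar> < \<delta> * l" by (simp add: abs_less_iff)
    then have "\<bar>(g n - c * l) / l\<bar> < \<delta>" using l0 by (simp add: abs_divide divide_less_eq)
    moreover have "(g n - c * l) / l = g n / l - c" using l0 by (simp add: field_simps)
    ultimately show ?case unfolding dist_real_def l_def by simp
  qed
qed


lemma dyadic: "(n::nat) \<ge> 1 \<Longrightarrow> \<exists>m. 2^m \<le> n \<and> n < 2^(Suc m)"
  using ex_power_ivl1[of 2 n] by auto

lemma dyadic_ge: "2^M0 \<le> (n::nat) \<Longrightarrow> n < 2^(Suc m) \<Longrightarrow> M0 \<le> m"
proof (rule ccontr)
  assume a: "2^M0 \<le> n" "n < 2^(Suc m)" "\<not> M0 \<le> m"
  then have "(2::nat)^(Suc m) \<le> 2^M0" by (intro power_increasing) auto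
  then show False using a by simp
qed

lemma ln_pow2_le: "2^m \<le> (n::nat) \<Longrightarrow> real m * ln 2 \<le> ln (real n)"
proof -
  assume a: "2^m \<le> n"
  have "real m * ln 2 = ln ((2::real)^m)" by (simp add: ln_realpow)
  also have "\<dots> \<le> ln (real n)"
  proof -
    have "(2::real)^m \<le> real n" using a by (metis of_nat_le_iff of_nat_numeral of_nat_power)
    moreover have "(0::real) < 2^m" by simp
    ultimately show ?thesis by (simp only: ln_le_cancel_iff order.strict_trans2)
  qed
  finally show ?thesis .
qed

lemma ln_pow2_less: "(n::nat) \<ge> 1 \<Longrightarrow> n < 2^(Suc m) \<Longrightarrow> ln (real n) < (real m + 1) * ln 2"
proof -
  assume a: "n \<ge> 1" "n < 2^(Suc m)"
  have "ln (real n) < ln ((2::real)^(Suc m))"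
  proof -
    have "real n < (2::real)^(Suc m)" using a(2) by (metis of_nat_less_iff of_nat_numeral of_nat_power)
    moreover have "(0::real) < real n" using a(1) by simp
    ultimately show ?thesis by (simp only: ln_less_cancel_iff order.strict_trans)
  qed
  also have "\<dots> = (real m + 1) * ln 2" using ln_realpow[of 2 "Suc m"] by (simp only: of_nat_Suc add.commute)
  finally show ?thesis .
qed

context rw
begin

definition cc :: real where "cc = - 1 / ln (2 * q)"

lemma q_half: "2 * q < 1" using qp pq1 by simp
lemma ln2q: "ln (2 * q) < 0" using q_half q_pos by simp
lemma cc_pos: "cc > 0" unfolding cc_def using ln2q by simp
lemma cc_ln: "cc * ln (2 * q) = -1" unfolding cc_def using ln2q by simp

lemma pow2q_exp: "(2 * q) ^ k = exp (real k * ln (2 * q))"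
  using q_pos by (simp add: exp_of_nat_mult)

end

context rwp
begin

lemma eta_mono: "n \<le> n' \<Longrightarrow> eta X n w \<le> eta X n' w"
proof -
  assume nn: "n \<le> n'"
  have eq: "\<And>n. {total_local_time X (walk X j w) w | j. j \<le> n} = (\<lambda>j. total_local_time X (walk X j w) w) ` {..n}"
    by auto
  show ?thesis unfolding eta_def eq
    by (rule Max_mono) (use nn in auto)
qed

lemma upper_AE:
  assumes e: "\<epsilon> > 0"
  shows "AE w in M. \<exists>C. eventually (\<lambda>n. real (eta X n w) \<le> (cc + cc * \<epsilon>) * ln (real n) + C) sequentially"
proof -
  define k where "k m = nat \<lceil>(1 + \<epsilon>) * cc * (real m + 1) * ln 2\<rceil>" for m
  define U where "U m = Dset (2^(Suc m)) (Suc (k m))" for m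
  define r where "r = exp (- (\<epsilon> * ln 2))"
  have r: "0 < r" "r < 1" unfolding r_def using e by auto
  have sU: "U m \<in> sets M" for m unfolding U_def by (rule sets_D)
  have pU: "prob (U m) \<le> 8 * r ^ m" for m
  proof -
    define y where "y = (1 + \<epsilon>) * cc * (real m + 1) * ln 2"
    have ky: "y \<le> real (k m)" unfolding k_def y_def by (rule real_nat_ceiling_ge)
    have "(2 * q) ^ k m = exp (real (k m) * ln (2 * q))" by (rule pow2q_exp)
    also have "\<dots> \<le> exp (y * ln (2 * q))"
      using ky ln2q by (subst exp_le_cancel_iff) (intro mult_right_mono_neg, auto)
    also have "y * ln (2 * q) = - ((1 + \<epsilon>) * (real m + 1) * ln 2)"
    proof -
      have "y * ln (2 * q) = ((1 + \<epsilon>) * (real m + 1) * ln 2) * (cc * ln (2 * q))"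
        unfolding y_def by (simp only: ac_simps)
      then show ?thesis using cc_ln by simp
    qed
    finally have t1: "(2 * q) ^ k m \<le> exp (- ((1 + \<epsilon>) * (real m + 1) * ln 2))" .
    have t2: "2 * real (2 ^ Suc m) + 1 \<le> 8 * exp (real m * ln 2)"
    proof -
      have ex: "exp (real m * ln 2) = 2 ^ m" by (simp add: exp_of_nat_mult)
      have h: "(1::real) \<le> 2 ^ m" by simp
      have "2 * real (2 ^ Suc m) + 1 = 4 * (2::real)^m + 1" by simp
      also have "\<dots> \<le> 8 * 2^m" using h by linarith
      also have "\<dots> = 8 * exp (real m * ln 2)" using ex by simp
      finally show ?thesis .
    qed
    have "prob (U m) \<le> (2 * real (2 ^ Suc m) + 1) * (2 * q) ^ k m" unfolding U_def by (rule prob_D)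
    also have "\<dots> \<le> (8 * exp (real m * ln 2)) * exp (- ((1 + \<epsilon>) * (real m + 1) * ln 2))"
      using t1 t2 q_pos by (intro mult_mono) auto
    also have "\<dots> = 8 * exp (real m * ln 2 - (1 + \<epsilon>) * (real m + 1) * ln 2)"
      using exp_add[of "real m * ln 2" "- ((1 + \<epsilon>) * (real m + 1) * ln 2)"] by simp
    also have "\<dots> \<le> 8 * exp (real m * (- (\<epsilon> * ln 2)))"
    proof -
      have l2: "ln (2::real) > 0" by simp
      have el: "\<epsilon> * ln 2 > 0" using e l2 by simp
      have "real m * ln 2 - (1 + \<epsilon>) * (real m + 1) * ln 2 = real m * (- (\<epsilon> * ln 2)) - ln 2 - \<epsilon> * ln 2"
        by (simp add: algebra_simps)
      then have "real m * ln 2 - (1 + \<epsilon>) * (real m + 1) * ln 2 \<le> real m * (- (\<epsilon> * ln 2))"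
        using l2 el by linarith
      then show ?thesis by simp
    qed
    also have "\<dots> = 8 * r ^ m" unfolding r_def using exp_of_nat_mult[of m "- (\<epsilon> * ln 2)"] by simp
    finally show ?thesis .
  qed
  have sum: "summable (\<lambda>m. prob (U m))"
  proof (rule summable_comparison_test')
    show "summable (\<lambda>m. 8 * r ^ m)" using r by (intro summable_mult summable_geometric) simp
    show "norm (prob (U m)) \<le> 8 * r ^ m" for m using pU by simp
  qed
  have BC: "AE w in M. eventually (\<lambda>m. w \<in> space M - U m) sequentially"
    by (rule borel_cantelli_AE1) (use sU sum in \<open>auto simp: emeasure_eq_measure\<close>)
  show ?thesis
    using BC AE_allX
  proof eventually_elim
    case (elim w)
    then obtain M0 where M0: "\<And>m. m \<ge> M0 \<Longrightarrow> w \<in> space M - U m"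
      unfolding eventually_sequentially by blast
    have ws: "w \<in> space M" using M0 by blast
    define C where "C = (1 + \<epsilon>) * cc * ln 2 + 1"
    have "eventually (\<lambda>n. real (eta X n w) \<le> (cc + cc * \<epsilon>) * ln (real n) + C) sequentially"
      unfolding eventually_sequentially
    proof (intro exI[of _ "2^M0"] allI impI)
      fix n :: nat assume n: "2^M0 \<le> n"
      then have n1: "n \<ge> 1" by (meson le_trans one_le_numeral one_le_power)
      obtain m where m: "2^m \<le> n" "n < 2^(Suc m)" using dyadic[OF n1] by blast
      have mM: "M0 \<le> m" using dyadic_ge[OF n m(2)] .
      have "w \<notin> U m" using M0[OF mM] by blast
      then have "\<not> Suc (k m) \<le> eta X (2^(Suc m)) w"
        using eta_D[OF ws elim(2)] unfolding U_def by blast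
      then have "eta X (2^(Suc m)) w \<le> k m" by simp
      moreover have "eta X n w \<le> eta X (2^(Suc m)) w" using m(2) by (intro eta_mono) simp
      ultimately have "real (eta X n w) \<le> real (k m)" by simp
      also have "\<dots> \<le> (1 + \<epsilon>) * cc * (real m + 1) * ln 2 + 1"
      proof -
        have "(1 + \<epsilon>) * cc * (real m + 1) * ln 2 \<ge> 0" using e cc_pos by simp
        then show ?thesis unfolding k_def by linarith
      qed
      also have "\<dots> = (1 + \<epsilon>) * cc * (real m * ln 2) + C" unfolding C_def by (simp add: algebra_simps)
      also have "\<dots> \<le> (1 + \<epsilon>) * cc * ln (real n) + C"
        using ln_pow2_le[OF m(1)] e cc_pos by (intro add_right_mono mult_left_mono) auto
      also have "\<dots> = (cc + cc * \<epsilon>) * ln (real n) + C" by (simp add: algebra_simps)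
      finally show "real (eta X n w) \<le> (cc + cc * \<epsilon>) * ln (real n) + C" .
    qed
    then show ?case by blast
  qed
qed

end


lemma real_div_ge: "(L::nat) > 0 \<Longrightarrow> real (N div L) \<ge> real N / real L - 1"
proof -
  assume L: "L > 0"
  have "N = N div L * L + N mod L" by simp
  then have "real N = real (N div L) * real L + real (N mod L)" by (metis of_nat_add of_nat_mult)
  moreover have "real (N mod L) < real L" using L by simp
  ultimately have "real N < (real (N div L) + 1) * real L" by (simp add: algebra_simps)
  then have "real N / real L < real (N div L) + 1" using L by (simp add: divide_less_eq)
  then show ?thesis by simp
qed

context rw
begin

lemma V_bound:
  fixes \<epsilon> \<rho> b :: real and T m :: nat
  assumes e: "0 < \<epsilon>" "\<epsilon> < 1" and bdef: "b = - ln (2 * q) * (1 - \<epsilon> / 2) / (1 - \<epsilon>)"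
    and rdef: "\<rho> = exp (- b)" and RT: "\<rho> < mu T (hit 0)" and T: "T \<ge> 1" and m: "m \<ge> 1"
  shows "mu (2^m) (\<lambda>s. \<forall>z. lt z s < nat \<lceil>(1 - \<epsilon>) * cc * real m * ln 2\<rceil>)
    \<le> exp 1 * ((cc * real m + 1) * real T / \<rho>) * exp (- (\<epsilon> / 2 * ln 2)) ^ m"
proof -
  define a where "a = - ln (2 * q)"
  have a: "a > 0" unfolding a_def using ln2q by simp
  have cca: "cc = 1 / a" unfolding cc_def a_def by simp
  have l2: "0 < ln (2::real)" "ln (2::real) < 1" using ln_2_less_1 by auto
  have b: "b > 0" unfolding bdef using a e by (simp add: a_def[symmetric])
  have rho: "0 < \<rho>" "\<rho> \<le> 1" unfolding rdef using b by auto
  define y where "y = (1 - \<epsilon>) * cc * real m * ln 2"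
  define k where "k = nat \<lceil>y\<rceil>"
  have y0: "y > 0" unfolding y_def using e cc_pos l2 m by simp
  have ky1: "y \<le> real k" unfolding k_def by (rule real_nat_ceiling_ge)
  have ky2: "real k \<le> y + 1" unfolding k_def using y0 by linarith
  have k1: "k \<ge> 1" using ky1 y0 by (cases k) auto
  define L where "L = k * T"
  have L0: "L > 0" unfolding L_def using k1 T by simp
  define B where "B = 2^m div L"
  have BL: "B * L \<le> 2^m" unfolding B_def by (metis div_mult_mod_eq le_add1)
  have "mu (2^m) (\<lambda>s. \<forall>z. lt z s < k) \<le> (1 - mu L (\<lambda>s. k \<le> lt 0 s)) ^ B"
    by (rule blocks_bound[OF BL])
  also have "\<dots> \<le> (1 - \<rho> ^ k) ^ B"
  proof (rule power_mono)
    have "\<rho> ^ k \<le> (mu T (hit 0)) ^ k" using rho RT by (intro power_mono) auto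
    also have "\<dots> \<le> mu L (\<lambda>s. k \<le> lt 0 s)" by (rule lt0_lower) (simp add: L_def)
    finally show "1 - mu L (\<lambda>s. k \<le> lt 0 s) \<le> 1 - \<rho> ^ k" by simp
    show "0 \<le> 1 - mu L (\<lambda>s. k \<le> lt 0 s)" using mu_le1 by simp
  qed
  also have "\<dots> \<le> exp (- (\<rho> ^ k)) ^ B"
  proof (rule power_mono)
    show "1 - \<rho> ^ k \<le> exp (- (\<rho> ^ k))" using exp_ge_add_one_self[of "- (\<rho> ^ k)"] by simp
    show "0 \<le> 1 - \<rho> ^ k" using rho by (simp add: power_le_one)
  qed
  also have "\<dots> = exp (- (real B * \<rho> ^ k))" by (simp add: exp_of_nat_mult[symmetric])
  finally have step1: "mu (2^m) (\<lambda>s. \<forall>z. lt z s < k) \<le> exp (- (real B * \<rho> ^ k))" .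
  define W where "W = \<rho> * exp (\<epsilon> / 2 * real m * ln 2) / ((cc * real m + 1) * real T)"
  have W0: "W > 0" unfolding W_def using rho cc_pos T
    by (intro divide_pos_pos mult_pos_pos add_nonneg_pos) auto
  have rk: "\<rho> ^ k \<ge> \<rho> * exp (- ((1 - \<epsilon> / 2) * real m * ln 2))"
  proof -
    have byv: "b * y = (1 - \<epsilon> / 2) * real m * ln 2"
      unfolding bdef y_def cca a_def[symmetric] using a e by (simp add: field_simps)
    have "real k * (- b) \<ge> (y + 1) * (- b)" using ky2 b by (intro mult_right_mono_neg) auto
    then have e1: "exp (real k * (- b)) \<ge> exp ((y + 1) * (- b))" by (simp only: exp_le_cancel_iff)
    have e2: "\<rho> ^ k = exp (real k * (- b))" unfolding rdef by (rule exp_of_nat_mult[symmetric])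
    have e3: "exp ((y + 1) * (- b)) = \<rho> * exp (- ((1 - \<epsilon> / 2) * real m * ln 2))"
    proof -
      have "(y + 1) * (- b) = (- b) + (- ((1 - \<epsilon> / 2) * real m * ln 2))" using byv by (simp add: algebra_simps)
      then show ?thesis unfolding rdef using exp_add[of "- b" "- ((1 - \<epsilon> / 2) * real m * ln 2)"] by simp
    qed
    show ?thesis unfolding e2 e3[symmetric] by (rule e1)
  qed
  have Lb: "real L \<le> (cc * real m + 1) * real T"
  proof -
    have "y \<le> cc * real m"
    proof -
      have "(1 - \<epsilon>) * ln 2 \<le> 1" using e l2 by (smt (verit) mult_le_one)
      then have "((1 - \<epsilon>) * ln 2) * (cc * real m) \<le> 1 * (cc * real m)"
        using cc_pos by (intro mult_right_mono) auto
      then show ?thesis unfolding y_def by (simp add: algebra_simps)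
    qed
    then have "real k \<le> cc * real m + 1" using ky2 by simp
    then show ?thesis unfolding L_def using T by (simp add: mult_right_mono)
  qed
  have rk1: "\<rho> ^ k \<le> 1" using rho by (simp add: power_le_one)
  have rk0: "\<rho> ^ k \<ge> 0" using rho by simp
  have BW: "real B * \<rho> ^ k \<ge> W - 1"
  proof -
    have "real B * \<rho> ^ k \<ge> (2^m / real L - 1) * \<rho> ^ k"
      using real_div_ge[OF L0, of "2^m"] rk0 unfolding B_def by (intro mult_right_mono) auto
    also have "(2^m / real L - 1) * \<rho> ^ k \<ge> 2^m * \<rho> ^ k / real L - 1"
      using rk1 by (simp add: algebra_simps)
    moreover have "2^m * \<rho> ^ k / real L \<ge> W"
    proof -
      have "2^m * (\<rho> * exp (- ((1 - \<epsilon> / 2) * real m * ln 2))) = \<rho> * exp (\<epsilon> / 2 * real m * ln 2)"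
      proof -
        have "(2::real)^m = exp (real m * ln 2)" by (simp add: exp_of_nat_mult)
        then have "2^m * exp (- ((1 - \<epsilon> / 2) * real m * ln 2)) = exp (real m * ln 2 + (- ((1 - \<epsilon> / 2) * real m * ln 2)))"
          unfolding exp_add by simp
        also have "real m * ln 2 + (- ((1 - \<epsilon> / 2) * real m * ln 2)) = \<epsilon> / 2 * real m * ln 2"
          by (simp add: algebra_simps)
        finally show ?thesis by (simp add: algebra_simps)
      qed
      then have "2^m * \<rho> ^ k \<ge> \<rho> * exp (\<epsilon> / 2 * real m * ln 2)"
        using rk by (metis mult_left_mono zero_le_numeral zero_le_power)
      moreover have "real L > 0" using L0 by simp
      ultimately have "2^m * \<rho> ^ k / real L \<ge> \<rho> * exp (\<epsilon> / 2 * real m * ln 2) / real L"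
        by (intro divide_right_mono) auto
      also have "\<rho> * exp (\<epsilon> / 2 * real m * ln 2) / real L \<ge> W"
        unfolding W_def using Lb rho L0 by (intro divide_left_mono) auto
      finally show ?thesis .
    qed
    ultimately show ?thesis by linarith
  qed
  have "exp (- (real B * \<rho> ^ k)) \<le> exp (1 - W)" using BW by simp
  also have "\<dots> = exp 1 * exp (- W)" by (simp add: exp_diff exp_minus field_simps)
  also have "\<dots> \<le> exp 1 * (1 / W)"
  proof -
    have "W \<le> exp W" using exp_ge_add_one_self[of W] by linarith
    then have "exp (- W) \<le> 1 / W" using W0 by (simp add: exp_minus field_simps)
    then show ?thesis by (intro mult_left_mono) auto
  qed
  also have "exp 1 * (1 / W) = exp 1 * ((cc * real m + 1) * real T / \<rho>) * exp (- (\<epsilon> / 2 * ln 2)) ^ m"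
  proof -
    have "exp (- (\<epsilon> / 2 * ln 2)) ^ m = 1 / exp (\<epsilon> / 2 * real m * ln 2)"
      using exp_of_nat_mult[of m "- (\<epsilon> / 2 * ln 2)"] by (simp add: exp_minus field_simps)
    then show ?thesis unfolding W_def using rho by (simp add: field_simps)
  qed
  finally show ?thesis using step1 unfolding k_def y_def by simp
qed

end


lemma summable_lin:
  fixes x :: real
  assumes x: "0 < x" "x < 1"
  shows "summable (\<lambda>m. (\<alpha> * real m + \<beta>) * x ^ m)"
proof -
  define s where "s = sqrt x"
  have s1: "0 < s" unfolding s_def using x by simp
  have "sqrt x < sqrt 1" using x by (simp only: real_sqrt_less_iff)
  then have s2: "s < 1" unfolding s_def by simp
  have s3: "s * s = x" unfolding s_def using x by simp
  note s = s1 s2 s3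
  have "(\<lambda>m. of_nat m * s ^ m) \<longlonglongrightarrow> (0::real)"
    by (rule powser_times_n_limit_0) (use s in simp)
  then have ev: "eventually (\<lambda>m. real m * s ^ m < 1) sequentially"
    by (rule order_tendstoD) simp
  have sm: "summable (\<lambda>m. real m * x ^ m)"
  proof (rule summable_comparison_test_ev)
    show "summable (\<lambda>m. s ^ m)" using s by (intro summable_geometric) simp
    show "eventually (\<lambda>m. norm (real m * x ^ m) \<le> s ^ m) sequentially"
      using ev
    proof eventually_elim
      case (elim m)
      have xm: "x ^ m = s ^ m * s ^ m" unfolding s(3)[symmetric] by (rule power_mult_distrib)
      have "norm (real m * x ^ m) = real m * x ^ m" using x by simp
      also have "\<dots> = (real m * s ^ m) * s ^ m" unfolding xm by (simp only: mult.assoc)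
      finally have "norm (real m * x ^ m) = (real m * s ^ m) * s ^ m" .
      also have "\<dots> \<le> 1 * s ^ m" using elim s by (intro mult_right_mono) auto
      finally show ?case by simp
    qed
  qed
  have "summable (\<lambda>m. \<alpha> * (real m * x ^ m) + \<beta> * x ^ m)"
    using sm x by (intro summable_add summable_mult summable_geometric) auto
  moreover have "(\<lambda>m. \<alpha> * (real m * x ^ m) + \<beta> * x ^ m) = (\<lambda>m. (\<alpha> * real m + \<beta>) * x ^ m)"
    by (rule ext) (simp add: algebra_simps)
  ultimately show ?thesis by simp
qed

context rwp
begin

lemma lower_AE:
  assumes e: "0 < \<epsilon>" "\<epsilon> < 1"
  shows "AE w in M. \<exists>C. eventually (\<lambda>n. (cc - cc * \<epsilon>) * ln (real n) - C \<le> real (max_local_time X n w)) sequentially"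
proof -
  define b where "b = - ln (2 * q) * (1 - \<epsilon> / 2) / (1 - \<epsilon>)"
  define \<rho> where "\<rho> = exp (- b)"
  have a: "- ln (2 * q) > 0" using ln2q by simp
  have "b > - ln (2 * q)"
  proof -
    have "(1 - \<epsilon> / 2) / (1 - \<epsilon>) > 1" using e by (simp add: field_simps)
    then have "- ln (2 * q) * ((1 - \<epsilon> / 2) / (1 - \<epsilon>)) > - ln (2 * q) * 1"
      using a by (intro mult_strict_left_mono) auto
    then show ?thesis unfolding b_def by simp
  qed
  then have "\<rho> < exp (ln (2 * q))" unfolding \<rho>_def by simp
  then have r2q: "\<rho> < 2 * q" using q_pos by simp
  have rpos: "\<rho> > 0" unfolding \<rho>_def by simp
  obtain T where T: "mu T (hit 0) > \<rho>" using R_large[OF r2q] by blast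
  have T1: "T \<ge> 1"
  proof (rule ccontr)
    assume "\<not> T \<ge> 1"
    then have "T = 0" by simp
    then have "mu T (hit 0) = 0" by (simp add: mu_0)
    then show False using T rpos by simp
  qed
  define k where "k m = nat \<lceil>(1 - \<epsilon>) * cc * real m * ln 2\<rceil>" for m
  define V where "V m = {w \<in> space M. \<forall>z. lt z (xs (2^m) w) < k m}" for m
  define x where "x = exp (- (\<epsilon> / 2 * ln 2))"
  have x: "0 < x" "x < 1" unfolding x_def using e by auto
  have sV: "V m \<in> sets M" for m unfolding V_def by (rule sets_xs)
  have pV: "prob (V m) \<le> exp 1 * ((cc * real m + 1) * real T / \<rho>) * x ^ m" if "m \<ge> 1" for m
  proof -
    have "prob (V m) = mu (2^m) (\<lambda>s. \<forall>z. lt z s < k m)" unfolding V_def by (rule bridge)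
    also have "\<dots> \<le> exp 1 * ((cc * real m + 1) * real T / \<rho>) * x ^ m"
      unfolding k_def x_def by (rule V_bound[OF e b_def \<rho>_def T T1 that])
    finally show ?thesis .
  qed
  have sum: "summable (\<lambda>m. prob (V m))"
  proof (rule summable_comparison_test')
    have "summable (\<lambda>m. (exp 1 * cc * real T / \<rho> * real m + exp 1 * real T / \<rho>) * x ^ m)"
      by (rule summable_lin[OF x])
    moreover have "(\<lambda>m. (exp 1 * cc * real T / \<rho> * real m + exp 1 * real T / \<rho>) * x ^ m)
        = (\<lambda>m. exp 1 * ((cc * real m + 1) * real T / \<rho>) * x ^ m)"
      by (intro ext) (simp add: algebra_simps add_divide_distrib)
    ultimately show "summable (\<lambda>m. exp 1 * ((cc * real m + 1) * real T / \<rho>) * x ^ m)" by simp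
    show "norm (prob (V m)) \<le> exp 1 * ((cc * real m + 1) * real T / \<rho>) * x ^ m" if "1 \<le> m" for m
      using pV[OF that] by simp
  qed
  have BC: "AE w in M. eventually (\<lambda>m. w \<in> space M - V m) sequentially"
    by (rule borel_cantelli_AE1) (use sV sum in \<open>auto simp: emeasure_eq_measure\<close>)
  show ?thesis
    using BC
  proof eventually_elim
    case (elim w)
    then obtain M0 where M0: "\<And>m. m \<ge> M0 \<Longrightarrow> w \<in> space M - V m"
      unfolding eventually_sequentially by blast
    define C where "C = (1 - \<epsilon>) * cc * ln 2"
    have "eventually (\<lambda>n. (cc - cc * \<epsilon>) * ln (real n) - C \<le> real (max_local_time X n w)) sequentially"
      unfolding eventually_sequentially
    proof (intro exI[of _ "2^(max M0 1)"] allI impI)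
      fix n :: nat assume n: "2^(max M0 1) \<le> n"
      then have n1: "n \<ge> 1" by (meson le_trans one_le_numeral one_le_power)
      obtain m where m: "2^m \<le> n" "n < 2^(Suc m)" using dyadic[OF n1] by blast
      have mM: "max M0 1 \<le> m" using dyadic_ge[OF n m(2)] .
      have "w \<in> space M - V m" by (rule M0) (use mM in simp)
      then have "\<exists>z. k m \<le> lt z (xs (2^m) w)" unfolding V_def by (auto simp: not_less)
      then obtain z where z: "k m \<le> lt z (xs (2^m) w)" by blast
      have "lt z (xs (2^m) w) \<le> lt z (xs n w)" using m(1) by (rule lt_xs_mono)
      also have "\<dots> = local_time X z n w" by (simp add: local_time_xs)
      also have "\<dots> \<le> max_local_time X n w" by (rule lt_le_max)
      finally have km: "real (k m) \<le> real (max_local_time X n w)" using z by simp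
      have "(1 - \<epsilon>) * cc * real m * ln 2 \<le> real (k m)" unfolding k_def by (rule real_nat_ceiling_ge)
      moreover have "(cc - cc * \<epsilon>) * ln (real n) - C \<le> (1 - \<epsilon>) * cc * real m * ln 2"
      proof -
        have "ln (real n) < (real m + 1) * ln 2" by (rule ln_pow2_less[OF n1 m(2)])
        then have "(1 - \<epsilon>) * cc * ln (real n) \<le> (1 - \<epsilon>) * cc * ((real m + 1) * ln 2)"
          using e cc_pos by (intro mult_left_mono) auto
        then show ?thesis unfolding C_def by (simp add: algebra_simps)
      qed
      ultimately show "(cc - cc * \<epsilon>) * ln (real n) - C \<le> real (max_local_time X n w)"
        using km by linarith
    qed
    then show ?case by blast
  qed
qed

theorem main:
  "AE w in M. (\<lambda>n. real (max_local_time X n w) / ln (real n)) \<longlonglongrightarrow> cc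
            \<and> (\<lambda>n. real (eta X n w) / ln (real n)) \<longlonglongrightarrow> cc"
proof -
  have U: "AE w in M. \<forall>j::nat. \<exists>C. eventually (\<lambda>n. real (eta X n w) \<le> (cc + cc * (1 / (real j + 2))) * ln (real n) + C) sequentially"
    unfolding AE_all_countable by (intro allI upper_AE) simp
  have L: "AE w in M. \<forall>j::nat. \<exists>C. eventually (\<lambda>n. (cc - cc * (1 / (real j + 2))) * ln (real n) - C \<le> real (max_local_time X n w)) sequentially"
    unfolding AE_all_countable by (intro allI lower_AE) auto
  show ?thesis
    using U L AE_fin
  proof eventually_elim
    case (elim w)
    have le: "max_local_time X n w \<le> eta X n w" for n by (rule xi_le_eta[OF elim(3)])
    have H: "\<exists>C. eventually (\<lambda>n. (cc - cc / (real j + 2)) * ln (real n) - C \<le> real (max_local_time X n w)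
              \<and> real (max_local_time X n w) \<le> (cc + cc / (real j + 2)) * ln (real n) + C
              \<and> (cc - cc / (real j + 2)) * ln (real n) - C \<le> real (eta X n w)
              \<and> real (eta X n w) \<le> (cc + cc / (real j + 2)) * ln (real n) + C) sequentially" for j
    proof -
      obtain C1 where C1: "eventually (\<lambda>n. real (eta X n w) \<le> (cc + cc * (1 / (real j + 2))) * ln (real n) + C1) sequentially"
        using elim(1) by blast
      obtain C2 where C2: "eventually (\<lambda>n. (cc - cc * (1 / (real j + 2))) * ln (real n) - C2 \<le> real (max_local_time X n w)) sequentially"
        using elim(2) by blast
      have "eventually (\<lambda>n. (cc - cc / (real j + 2)) * ln (real n) - max C1 C2 \<le> real (max_local_time X n w)
              \<and> real (max_local_time X n w) \<le> (cc + cc / (real j + 2)) * ln (real n) + max C1 C2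
              \<and> (cc - cc / (real j + 2)) * ln (real n) - max C1 C2 \<le> real (eta X n w)
              \<and> real (eta X n w) \<le> (cc + cc / (real j + 2)) * ln (real n) + max C1 C2) sequentially"
        using C1 C2
      proof eventually_elim
        case (elim n)
        have "real (max_local_time X n w) \<le> real (eta X n w)" using le[of n] by simp
        then show ?case using elim by (simp add: max_def)
      qed
      then show ?thesis by blast
    qed
    have "(\<lambda>n. real (max_local_time X n w) / ln (real n)) \<longlonglongrightarrow> cc"
    proof (rule squeeze[OF cc_pos])
      fix j :: nat
      obtain C where C: "eventually (\<lambda>n. (cc - cc / (real j + 2)) * ln (real n) - C \<le> real (max_local_time X n w)
              \<and> real (max_local_time X n w) \<le> (cc + cc / (real j + 2)) * ln (real n) + C
              \<and> (cc - cc / (real j + 2)) * ln (real n) - C \<le> real (eta X n w)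
              \<and> real (eta X n w) \<le> (cc + cc / (real j + 2)) * ln (real n) + C) sequentially"
        using H by blast
      have "eventually (\<lambda>n. (cc - cc / (real j + 2)) * ln (real n) - C \<le> real (max_local_time X n w)
              \<and> real (max_local_time X n w) \<le> (cc + cc / (real j + 2)) * ln (real n) + C) sequentially"
        using C by (rule eventually_mono) simp
      then show "\<exists>C. eventually (\<lambda>n. (cc - cc / (real j + 2)) * ln (real n) - C \<le> real (max_local_time X n w)
              \<and> real (max_local_time X n w) \<le> (cc + cc / (real j + 2)) * ln (real n) + C) sequentially" by blast
    qed
    moreover have "(\<lambda>n. real (eta X n w) / ln (real n)) \<longlonglongrightarrow> cc"
    proof (rule squeeze[OF cc_pos])
      fix j :: nat
      obtain C where C: "eventually (\<lambda>n. (cc - cc / (real j + 2)) * ln (real n) - C \<le> real (max_local_time X n w)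
              \<and> real (max_local_time X n w) \<le> (cc + cc / (real j + 2)) * ln (real n) + C
              \<and> (cc - cc / (real j + 2)) * ln (real n) - C \<le> real (eta X n w)
              \<and> real (eta X n w) \<le> (cc + cc / (real j + 2)) * ln (real n) + C) sequentially"
        using H by blast
      have "eventually (\<lambda>n. (cc - cc / (real j + 2)) * ln (real n) - C \<le> real (eta X n w)
              \<and> real (eta X n w) \<le> (cc + cc / (real j + 2)) * ln (real n) + C) sequentially"
        using C by (rule eventually_mono) simp
      then show "\<exists>C. eventually (\<lambda>n. (cc - cc / (real j + 2)) * ln (real n) - C \<le> real (eta X n w)
              \<and> real (eta X n w) \<le> (cc + cc / (real j + 2)) * ln (real n) + C) sequentially" by blast
    qed
    ultimately show ?case by blast
  qed
qed

end

theorem theorem3p1: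
  fixes M :: "'a measure" and X :: "nat \<Rightarrow> 'a \<Rightarrow> int" and p q :: real
  assumes "prob_space M"
    and "0 < q" and "q < p" and "p < 1" and "p + q = 1"
    and "prob_space.indep_vars M (\<lambda>_. count_space UNIV) X {1..}"
    and "\<And>i. i \<ge> 1 \<Longrightarrow> measure M {w \<in> space M. X i w = 1} = p"
    and "\<And>i. i \<ge> 1 \<Longrightarrow> measure M {w \<in> space M. X i w = -1} = q"
  shows "AE w in M.
           (\<lambda>n. real (max_local_time X n w) / ln (real n)) \<longlonglongrightarrow> -1 / ln (2 * q)
         \<and> (\<lambda>n. real (eta X n w) / ln (real n)) \<longlonglongrightarrow> -1 / ln (2 * q)"
proof -
  interpret rwp p q M X
    using assms by (simp add: rwp_def rw_def rwp_axioms_def)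
  show ?thesis using main unfolding cc_def .
qed

end
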